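(* The set $\mathcal{Q}_0^\pi\subset\mathcal D$ belongs to $\mathcal F$, the Borel $\sigma$-algebra of $\mathcal D$ for the Skorokhod $J_1$ topology.
   Context: Let $\pi=(\pi_n)_{n\ge1}$ be a sequence of partitions $\pi_n=(t^n_0,\dots,t^n_{k_n})$ with $0=t^n_0<\dots<t^n_{k_n}<\infty$, $t^n_{k_n}\uparrow\infty$, and mesh tending to $0$ on compacts; sums over $i$ run over $0\le i<k_n$. $\mathcal D$ is the space of càdlàg functions $[0,\infty)\to\mathbb R$ with the Skorokhod $J_1$ topology (whose Borel $\sigma$-algebra coincides with the $\sigma$-algebra generated by the coordinate maps). $\Delta x(u)=x(u)-x(u-)$. $\mathcal{Q}_0^\pi$ is the set of $x\in\mathcal D$ such that the measures $\mu_n=\sum_i(x(t^n_{i+1})-x(t^n_i))^2\delta_{t^n_i}$ converge vaguely to a Radon measure $\mu$ on $[0,\infty)$ such that $t\mapsto\mu([0,t])-\sum_{u\le t}(\Delta x(u))^2$ is a continuous nondecreasing function. *)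

theory Defs
  imports "HOL-Analysis.Analysis"
begin

text \<open>Cadlag paths on [0,oo), represented as real functions vanishing on (-oo,0).\<close>
definition cadlag :: "(real \<Rightarrow> real) set" where
  "cadlag = {x. (\<forall>s<0. x s = 0)
              \<and> (\<forall>s\<ge>0. continuous (at_right s) x)
              \<and> (\<forall>s>0. \<exists>l. (x \<longlongrightarrow> l) (at_left s))}"

text \<open>Jump of x at u (with the convention x(0-) = x(0)).\<close>
definition jump :: "(real \<Rightarrow> real) \<Rightarrow> real \<Rightarrow> real" where
  "jump x u = (if u > 0 then x u - Lim (at_left u) x else 0)"

text \<open>Skorokhod J1 convergence of a sequence in D (Ethier--Kurtz, Prop. 3.5.3).\<close>
definition J1_conv :: "(nat \<Rightarrow> real \<Rightarrow> real) \<Rightarrow> (real \<Rightarrow> real) \<Rightarrow> bool" where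
  "J1_conv xs x \<longleftrightarrow>
     (\<exists>lam :: nat \<Rightarrow> real \<Rightarrow> real.
        (\<forall>n. strict_mono_on {0..} (lam n) \<and> continuous_on {0..} (lam n)
              \<and> lam n ` {0..} = {0..}) \<and>
        (\<forall>T>0. (\<lambda>n. SUP s\<in>{0..T}. \<bar>lam n s - s\<bar>) \<longlonglongrightarrow> 0 \<and>
                (\<lambda>n. SUP s\<in>{0..T}. \<bar>xs n (lam n s) - x s\<bar>) \<longlonglongrightarrow> 0))"

text \<open>Closed subsets of D for the J1 topology (metrizable, hence sequential).\<close>
definition J1_closed :: "(real \<Rightarrow> real) set \<Rightarrow> bool" where
  "J1_closed A \<longleftrightarrow> A \<subseteq> cadlag \<and>
     (\<forall>xs x. (\<forall>n. xs n \<in> A) \<longrightarrow> x \<in> cadlag \<longrightarrow> J1_conv xs x \<longrightarrow> x \<in> A)"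

definition skorokhod_borel :: "(real \<Rightarrow> real) set set" where
  "skorokhod_borel = sigma_sets cadlag {A. J1_closed A}"

text \<open>Sequence of partitions: pi_n = (t n 0, ..., t n (k n)).\<close>
definition partition_seq :: "(nat \<Rightarrow> nat \<Rightarrow> real) \<Rightarrow> (nat \<Rightarrow> nat) \<Rightarrow> bool" where
  "partition_seq t k \<longleftrightarrow>
     (\<forall>n. t n 0 = 0) \<and>
     (\<forall>n. \<forall>i<k n. t n i < t n (Suc i)) \<and>
     incseq (\<lambda>n. t n (k n)) \<and> filterlim (\<lambda>n. t n (k n)) at_top sequentially \<and>
     (\<forall>T>0. (\<lambda>n. Max ({t n (Suc i) - t n i | i. i < k n \<and> t n i \<le> T} \<union> {0}))
              \<longlonglongrightarrow> 0)"

definition Q0 :: "(nat \<Rightarrow> nat \<Rightarrow> real) \<Rightarrow> (nat \<Rightarrow> nat) \<Rightarrow> (real \<Rightarrow> real) set" where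
  "Q0 t k = {x \<in> cadlag. \<exists>\<mu> :: real measure.
      sets \<mu> = sets borel \<and> emeasure \<mu> {..<0} = 0 \<and>
      (\<forall>T. emeasure \<mu> {0..T} < \<infinity>) \<and>
      (\<forall>f :: real \<Rightarrow> real. continuous_on {0..} f \<and> (\<exists>T. \<forall>s\<ge>T. f s = 0) \<longrightarrow>
         (\<lambda>n. \<Sum>i<k n. (x (t n (Suc i)) - x (t n i))\<^sup>2 * f (t n i))
           \<longlonglongrightarrow> integral\<^sup>L \<mu> (\<lambda>s. f (max 0 s))) \<and>
      (\<forall>s\<ge>0. (\<lambda>u. (jump x u)\<^sup>2) summable_on {0..s}) \<and>
      continuous_on {0..} (\<lambda>s. measure \<mu> {0..s} - (\<Sum>\<^sub>\<infinity>u\<in>{0..s}. (jump x u)\<^sup>2)) \<and>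
      mono_on {0..} (\<lambda>s. measure \<mu> {0..s} - (\<Sum>\<^sub>\<infinity>u\<in>{0..s}. (jump x u)\<^sup>2))}"

end

theory Submission
  imports Defs
begin

lemma cadlag_local_bound:
  assumes x: "x \<in> cadlag"
  shows "\<exists>d>0. \<exists>B. \<forall>v\<in>ball s d. \<bar>x v\<bar> \<le> B"
proof (cases "s \<ge> 0")
  case True
  have rc: "continuous (at_right s) x" using x True by (auto simp: cadlag_def)
  then have "(x \<longlongrightarrow> x s) (at_right s)" by (simp add: continuous_within)
  then have "\<forall>\<^sub>F v in at_right s. dist (x v) (x s) < 1" by (rule tendstoD) simp
  then obtain b1 where b1: "b1 > s" "\<And>v. s < v \<Longrightarrow> v < b1 \<Longrightarrow> dist (x v) (x s) < 1"
    by (auto simp: eventually_at_right_field)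
  define d1 where "d1 = b1 - s"
  have d1: "d1 > 0" "\<And>v. s < v \<Longrightarrow> v < s + d1 \<Longrightarrow> dist (x v) (x s) < 1"
    using b1 by (auto simp: d1_def)
  obtain d2 l where d2: "d2 > 0" "\<And>v. s - d2 < v \<Longrightarrow> v < s \<Longrightarrow> \<bar>x v\<bar> \<le> l"
  proof (cases "s > 0")
    case True
    then obtain l where "(x \<longlongrightarrow> l) (at_left s)" using x by (auto simp: cadlag_def)
    then have "\<forall>\<^sub>F v in at_left s. dist (x v) l < 1" by (rule tendstoD) simp
    then obtain b where b: "b < s" "\<And>v. b < v \<Longrightarrow> v < s \<Longrightarrow> dist (x v) l < 1"
      by (auto simp: eventually_at_left_field)
    have "\<bar>x v\<bar> \<le> \<bar>l\<bar> + 1" if "s - (s - b) < v" "v < s" for v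
    proof -
      have "\<bar>x v - l\<bar> < 1" using b(2)[of v] that by (simp add: dist_real_def)
      then show ?thesis by linarith
    qed
    then show ?thesis using b(1)
      by (intro that[of "s - b" "\<bar>l\<bar> + 1"]) auto
  next
    case False
    with \<open>s \<ge> 0\<close> have "s = 0" by simp
    then show ?thesis using x by (intro that[of 1 0]) (auto simp: cadlag_def)
  qed
  show ?thesis
  proof (intro exI conjI ballI)
    show "min d1 d2 > 0" using d1 d2 by simp
    fix v assume "v \<in> ball s (min d1 d2)"
    then have v: "s - d2 < v" "v < s + d1" by (auto simp: dist_real_def)
    consider "v < s" | "v = s" | "v > s" by linarith
    then show "\<bar>x v\<bar> \<le> \<bar>x s\<bar> + 1 + l"
    proof cases
      case 1 then show ?thesis using d2(2)[OF v(1)] by simp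
    next
      case 2 then show ?thesis using d2(2)[of "s - d2/2"] d2(1) by simp
    next
      case 3 then show ?thesis using d1(2)[OF 3 v(2)] d2(2)[of "s - d2/2"] d2(1)
        by (simp add: dist_real_def)
    qed
  qed
next
  case False
  show ?thesis
  proof (intro exI conjI ballI)
    show "(- s) > 0" using False by simp
    fix v assume "v \<in> ball s (- s)"
    then have "v < 0" using False by (auto simp: dist_real_def)
    then show "\<bar>x v\<bar> \<le> 0" using x by (simp add: cadlag_def)
  qed
qed

lemma cadlag_bounded:
  assumes x: "x \<in> cadlag"
  shows "\<exists>B. \<forall>v. v \<le> T \<longrightarrow> \<bar>x v\<bar> \<le> B"
proof -
  have "\<forall>s. \<exists>d>0. \<exists>B. \<forall>v\<in>ball s d. \<bar>x v\<bar> \<le> B" using cadlag_local_bound[OF x] by blast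
  then obtain d B where dB: "\<And>s. d s > 0" "\<And>s v. v \<in> ball s (d s) \<Longrightarrow> \<bar>x v\<bar> \<le> B s"
    by metis
  have "compact {0..T}" by simp
  moreover have "{0..T} \<subseteq> (\<Union>s\<in>{0..T}. ball s (d s))" using dB(1) by force
  ultimately obtain C where C: "C \<subseteq> {0..T}" "finite C" "{0..T} \<subseteq> (\<Union>s\<in>C. ball s (d s))"
    by (elim compactE_image) auto
  show ?thesis
  proof (intro exI allI impI)
    fix v assume "v \<le> T"
    show "\<bar>x v\<bar> \<le> (\<Sum>s\<in>C. \<bar>B s\<bar>)"
    proof (cases "v < 0")
      case True then show ?thesis using x by (simp add: cadlag_def sum_nonneg)
    next
      case False
      then have "v \<in> {0..T}" using \<open>v \<le> T\<close> by simp
      then obtain s where s: "s \<in> C" "v \<in> ball s (d s)" using C(3) by blast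
      have "\<bar>x v\<bar> \<le> \<bar>B s\<bar>" using dB(2)[OF s(2)] by simp
      also have "\<dots> \<le> (\<Sum>s\<in>C. \<bar>B s\<bar>)" using s(1) C(2) by (intro member_le_sum) auto
      finally show ?thesis .
    qed
  qed
qed

lemma bdd_above_cont_compact:
  fixes f :: "real \<Rightarrow> real"
  assumes "continuous_on S f" "compact S"
  shows "bdd_above (f ` S)"
  using assms by (intro bounded_imp_bdd_above compact_imp_bounded compact_continuous_image)

lemma J1_pointwise:
  assumes J: "J1_conv xs x" and xs: "\<And>n. xs n \<in> cadlag" and x: "x \<in> cadlag"
  obtains lam where "\<And>n. strict_mono_on {0..} (lam n) \<and> continuous_on {0..} (lam n) \<and> lam n ` {0..} = {0..}"
    "\<And>u. u \<ge> 0 \<Longrightarrow> (\<lambda>n. lam n u) \<longlonglongrightarrow> u"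
    "\<And>u. u \<ge> 0 \<Longrightarrow> (\<lambda>n. xs n (lam n u)) \<longlonglongrightarrow> x u"
proof -
  obtain lam where lam: "\<And>n. strict_mono_on {0..} (lam n) \<and> continuous_on {0..} (lam n) \<and> lam n ` {0..} = {0..}"
    and c1: "\<And>T. T > 0 \<Longrightarrow> (\<lambda>n. SUP s\<in>{0..T}. \<bar>lam n s - s\<bar>) \<longlonglongrightarrow> 0"
    and c2: "\<And>T. T > 0 \<Longrightarrow> (\<lambda>n. SUP s\<in>{0..T}. \<bar>xs n (lam n s) - x s\<bar>) \<longlonglongrightarrow> 0"
    using J unfolding J1_conv_def by blast
  show ?thesis
  proof (rule that[of lam])
    show "strict_mono_on {0..} (lam n) \<and> continuous_on {0..} (lam n) \<and> lam n ` {0..} = {0..}" for n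
      using lam by blast
  next
    fix u :: real assume u: "u \<ge> 0"
    define T where "T = u + 1"
    have T: "T > 0" "u \<in> {0..T}" using u by (auto simp: T_def)
    have cl: "continuous_on {0..T} (lam n)" for n
      using lam[of n] by (rule continuous_on_subset[OF conjunct1[OF conjunct2]]) auto
    have b1: "\<bar>lam n u - u\<bar> \<le> (SUP s\<in>{0..T}. \<bar>lam n s - s\<bar>)" for n
    proof (rule cSUP_upper[OF T(2)])
      show "bdd_above ((\<lambda>s. \<bar>lam n s - s\<bar>) ` {0..T})"
        by (intro bdd_above_cont_compact continuous_intros cl) auto
    qed
    have "(\<lambda>n. lam n u - u) \<longlonglongrightarrow> 0"
      by (rule Lim_null_comparison[OF _ c1[OF T(1)]]) (use b1 in auto)
    then have "(\<lambda>n. lam n u - u + u) \<longlonglongrightarrow> 0 + u" by (intro tendsto_add) auto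
    then show "(\<lambda>n. lam n u) \<longlonglongrightarrow> u" by simp
    have b2: "\<bar>xs n (lam n u) - x u\<bar> \<le> (SUP s\<in>{0..T}. \<bar>xs n (lam n s) - x s\<bar>)" for n
    proof (rule cSUP_upper[OF T(2)])
      have "bdd_above (lam n ` {0..T})"
        by (intro bdd_above_cont_compact cl) auto
      then obtain M where M0: "\<forall>y\<in>lam n ` {0..T}. y \<le> M" unfolding bdd_above_def by blast
      then have M: "\<And>s. s \<in> {0..T} \<Longrightarrow> lam n s \<le> M" by blast
      obtain B1 where B1: "\<And>v. v \<le> M \<Longrightarrow> \<bar>xs n v\<bar> \<le> B1" using cadlag_bounded[OF xs[of n]] by blast
      obtain B2 where B2: "\<And>v. v \<le> T \<Longrightarrow> \<bar>x v\<bar> \<le> B2" using cadlag_bounded[OF x] by blast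
      show "bdd_above ((\<lambda>s. \<bar>xs n (lam n s) - x s\<bar>) ` {0..T})"
      proof (rule bdd_aboveI2)
        fix s assume s: "s \<in> {0..T}"
        have "\<bar>xs n (lam n s)\<bar> \<le> B1" using B1 M[OF s] by blast
        moreover have "\<bar>x s\<bar> \<le> B2" using B2 s by auto
        ultimately show "\<bar>xs n (lam n s) - x s\<bar> \<le> B1 + B2" by linarith
      qed
    qed
    have "(\<lambda>n. xs n (lam n u) - x u) \<longlonglongrightarrow> 0"
      by (rule Lim_null_comparison[OF _ c2[OF T(1)]]) (use b2 in auto)
    then have "(\<lambda>n. xs n (lam n u) - x u + x u) \<longlonglongrightarrow> 0 + x u" by (intro tendsto_add) auto
    then show "(\<lambda>n. xs n (lam n u)) \<longlonglongrightarrow> x u" by simp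
  qed
qed

definition Clo :: "real \<Rightarrow> real \<Rightarrow> real \<Rightarrow> (real \<Rightarrow> real) set" where
  "Clo a b c = {x\<in>cadlag. \<forall>u. a \<le> u \<and> u < b \<longrightarrow> x u \<le> c}"

lemma Clo_closed:
  assumes ab: "0 \<le> a" "a < b"
  shows "J1_closed (Clo a b c)"
  unfolding J1_closed_def
proof (intro conjI allI impI)
  show "Clo a b c \<subseteq> cadlag" by (auto simp: Clo_def)
  fix xs x assume xsC: "\<forall>n. xs n \<in> Clo a b c" and x: "x \<in> cadlag" and J: "J1_conv xs x"
  have xs: "xs n \<in> cadlag" for n using xsC by (auto simp: Clo_def)
  obtain lam where lam2: "\<And>u. u \<ge> 0 \<Longrightarrow> (\<lambda>n. lam n u) \<longlonglongrightarrow> u"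
    and lam3: "\<And>u. u \<ge> 0 \<Longrightarrow> (\<lambda>n. xs n (lam n u)) \<longlonglongrightarrow> x u"
    using J1_pointwise[OF J xs x] by metis
  have inner: "x u \<le> c" if u: "a < u" "u < b" for u
  proof -
    have "\<forall>\<^sub>F n in sequentially. lam n u \<in> {a<..<b}"
      using lam2[of u] u ab by (intro topological_tendstoD) auto
    then have "\<forall>\<^sub>F n in sequentially. xs n (lam n u) \<le> c"
      by eventually_elim (use xsC in \<open>auto simp: Clo_def\<close>)
    then show ?thesis using lam3[of u] u ab
      by (intro tendsto_upperbound[of "\<lambda>n. xs n (lam n u)" _ sequentially]) auto
  qed
  have "x u \<le> c" if u: "a \<le> u" "u < b" for u
  proof (cases "u = a")
    case False then show ?thesis using inner u by auto
  next
    case True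
    have "continuous (at_right a) x" using x ab by (auto simp: cadlag_def)
    then have "(x \<longlongrightarrow> x a) (at_right a)" by (simp add: continuous_within)
    moreover have "\<forall>\<^sub>F v in at_right a. x v \<le> c"
      unfolding eventually_at_right_field using ab inner by (intro exI[of _ b]) auto
    ultimately have "x a \<le> c" by (intro tendsto_upperbound[of x _ "at_right a"]) auto
    then show ?thesis using True by simp
  qed
  then show "x \<in> Clo a b c" using x by (auto simp: Clo_def)
qed

definition Msk :: "(real \<Rightarrow> real) measure" where
  "Msk = sigma cadlag {A. J1_closed A}"

lemma J1_closed_sub: "{A. J1_closed A} \<subseteq> Pow cadlag"
  by (auto simp: J1_closed_def)

lemma sets_Msk: "sets Msk = skorokhod_borel"
  unfolding Msk_def skorokhod_borel_def using J1_closed_sub by (rule sets_measure_of)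

lemma space_Msk: "space Msk = cadlag"
  unfolding Msk_def using J1_closed_sub by (rule space_measure_of)

lemma Clo_sets: "0 \<le> a \<Longrightarrow> a < b \<Longrightarrow> Clo a b c \<in> sets Msk"
  unfolding sets_Msk skorokhod_borel_def by (rule sigma_sets.Basic) (simp add: Clo_closed)

lemma coord_level:
  assumes s: "s \<ge> 0"
  shows "{x\<in>cadlag. x s \<le> c} = (\<Inter>j. \<Union>m. Clo s (s + 1 / Suc m) (c + 1 / Suc j))"
proof (intro equalityI subsetI)
  fix x assume "x \<in> {x\<in>cadlag. x s \<le> c}"
  then have x: "x \<in> cadlag" "x s \<le> c" by auto
  show "x \<in> (\<Inter>j. \<Union>m. Clo s (s + 1 / Suc m) (c + 1 / Suc j))"
  proof
    fix j
    have "continuous (at_right s) x" using x s by (auto simp: cadlag_def)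
    then have "(x \<longlongrightarrow> x s) (at_right s)" by (simp add: continuous_within)
    then have "\<forall>\<^sub>F v in at_right s. dist (x v) (x s) < 1 / Suc j" by (rule tendstoD) simp
    then obtain b where b: "b > s" "\<And>v. s < v \<Longrightarrow> v < b \<Longrightarrow> dist (x v) (x s) < 1 / Suc j"
      by (auto simp: eventually_at_right_field)
    have bs: "b - s > 0" using b(1) by simp
    obtain m where m: "1 / real (Suc m) < b - s" using nat_approx_posE[OF bs] by blast
    have "x \<in> Clo s (s + 1 / Suc m) (c + 1 / Suc j)"
      unfolding Clo_def
    proof (intro CollectI conjI allI impI x(1))
      fix u assume u: "s \<le> u \<and> u < s + 1 / Suc m"
      show "x u \<le> c + 1 / Suc j"
      proof (cases "u = s")
        case True then show ?thesis using x(2) by (simp add: add_increasing2)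
      next
        case False
        then have "dist (x u) (x s) < 1 / Suc j" using b(2)[of u] u m by auto
        then show ?thesis using x(2) by (simp add: dist_real_def)
      qed
    qed
    then show "x \<in> (\<Union>m. Clo s (s + 1 / Suc m) (c + 1 / Suc j))" by blast
  qed
next
  fix x assume "x \<in> (\<Inter>j. \<Union>m. Clo s (s + 1 / Suc m) (c + 1 / Suc j))"
  then have h: "\<And>j. \<exists>m. x \<in> Clo s (s + 1 / Suc m) (c + 1 / Suc j)" by blast
  then have xc: "x \<in> cadlag" by (auto simp: Clo_def)
  have xj: "x s \<le> c + 1 / Suc j" for j using h[of j] by (auto simp: Clo_def)
  have "x s \<le> c"
  proof (rule field_le_epsilon)
    fix e :: real assume "0 < e"
    then obtain j where "1 / real (Suc j) < e" by (rule nat_approx_posE)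
    then show "x s \<le> c + e" using xj[of j] by linarith
  qed
  then show "x \<in> {x\<in>cadlag. x s \<le> c}" using xc by simp
qed

lemma coord_measurable: "(\<lambda>x. x s) \<in> borel_measurable Msk"
proof (cases "s \<ge> 0")
  case True
  show ?thesis unfolding borel_measurable_iff_le space_Msk
  proof
    fix c
    have "(\<Inter>j. \<Union>m. Clo s (s + 1 / Suc m) (c + 1 / Suc j)) \<in> sets Msk"
    proof (intro sets.countable_INT)
      show "range (\<lambda>j. \<Union>m. Clo s (s + 1 / Suc m) (c + 1 / Suc j)) \<subseteq> sets Msk"
      proof safe
        fix j
        show "(\<Union>m. Clo s (s + 1 / Suc m) (c + 1 / Suc j)) \<in> sets Msk"
        proof (rule sets.countable_UN, safe)
          fix m show "Clo s (s + 1 / Suc m) (c + 1 / Suc j) \<in> sets Msk"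
            using True by (intro Clo_sets) auto
        qed
      qed
    qed auto
    then show "{w \<in> cadlag. w s \<le> c} \<in> sets Msk" using coord_level[OF True] by simp
  qed
next
  case False
  then have "\<And>x. x \<in> space Msk \<Longrightarrow> x s = 0" by (auto simp: space_Msk cadlag_def)
  then show ?thesis by (subst measurable_cong[where g = "\<lambda>_. 0"]) auto
qed

definition gq :: "real \<Rightarrow> nat \<Rightarrow> real \<Rightarrow> real" where
  "gq q m s = max 0 (min 1 (1 - real (Suc m) * (s - q)))"

definition Sn :: "(nat \<Rightarrow> nat \<Rightarrow> real) \<Rightarrow> (nat \<Rightarrow> nat) \<Rightarrow> (real \<Rightarrow> real) \<Rightarrow> (real \<Rightarrow> real) \<Rightarrow> nat \<Rightarrow> real" where
  "Sn t k f x n = (\<Sum>i<k n. (x (t n (Suc i)) - x (t n i))\<^sup>2 * f (t n i))"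

definition Lq where "Lq t k q m x = lim (\<lambda>n. Sn t k (gq q m) x n)"
definition Fq where "Fq t k q x = (INF m. Lq t k q m x)"
definition Ht where "Ht t k x s = (if s < 0 then 0 else (INF q\<in>{q\<in>\<rat>. s < q}. Fq t k q x))"

definition Conv where
  "Conv t k x \<longleftrightarrow> (\<forall>q\<in>\<rat>. q \<ge> 0 \<longrightarrow> (\<forall>m. convergent (\<lambda>n. Sn t k (gq q m) x n)))"

definition JCp :: "(real \<Rightarrow> real) \<Rightarrow> (real \<Rightarrow> real) \<Rightarrow> bool" where
  "JCp H x \<longleftrightarrow> (\<forall>N::nat. \<forall>j::nat. \<exists>m::nat. \<forall>a\<in>\<rat>. \<forall>b\<in>\<rat>. 0 < a \<longrightarrow> a < b \<longrightarrow> b \<le> real N \<longrightarrow>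
      b - a < 1 / real (Suc m) \<longrightarrow> \<bar>H b - H a - (x b - x a)\<^sup>2\<bar> < 1 / real (Suc j))"

definition Eset where "Eset t k = {x\<in>cadlag. Conv t k x \<and> JCp (Ht t k x) x}"

declare coord_measurable[measurable]

lemma Sn_meas[measurable]: "(\<lambda>x. Sn t k f x n) \<in> borel_measurable Msk"
  unfolding Sn_def by measurable

lemma Lq_meas[measurable]: "(\<lambda>x. Lq t k q m x) \<in> borel_measurable Msk"
  unfolding Lq_def by measurable

lemma Fq_meas[measurable]: "(\<lambda>x. Fq t k q x) \<in> borel_measurable Msk"
  unfolding Fq_def by (rule borel_measurable_cINF_real) auto

lemma Ht_meas[measurable]: "(\<lambda>x. Ht t k x s) \<in> borel_measurable Msk"
proof (cases "s < 0")
  case True then show ?thesis by (simp add: Ht_def)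
next
  case False
  have "countable {q\<in>\<rat>. s < q}" by (rule countable_subset[OF _ countable_rat]) auto
  then have "(\<lambda>x. INF q\<in>{q\<in>\<rat>. s < q}. Fq t k q x) \<in> borel_measurable Msk"
    by (rule borel_measurable_cINF_real) auto
  then show ?thesis using False by (simp add: Ht_def)
qed

lemma sets_Collect_const_imp:
  "(P \<Longrightarrow> {x\<in>space M. Q x} \<in> sets M) \<Longrightarrow> {x\<in>space M. P \<longrightarrow> Q x} \<in> sets M"
  by (cases P) auto

lemma Conv_sets: "{x\<in>space Msk. Conv t k x} \<in> sets Msk"
proof -
  have "{x\<in>space Msk. Conv t k x} = {x\<in>space Msk. \<forall>q\<in>\<rat>. q \<ge> 0 \<longrightarrow> (\<forall>m. Cauchy (\<lambda>n. Sn t k (gq q m) x n))}"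
    by (simp add: Conv_def Cauchy_convergent_iff)
  also have "\<dots> \<in> sets Msk"
    apply (rule sets.sets_Collect_countable_All'[OF _ countable_rat])
    apply (rule sets_Collect_const_imp)
    apply (rule sets.sets_Collect_countable_All)
    apply (rule sets_Collect_Cauchy)
    apply (rule Sn_meas)
    done
  finally show ?thesis .
qed

lemma JC_sets: "{x\<in>space Msk. JCp (Ht t k x) x} \<in> sets Msk"
  unfolding JCp_def
  apply (rule sets.sets_Collect_countable_All)
  apply (rule sets.sets_Collect_countable_All)
  apply (rule sets.sets_Collect_countable_Ex)
  apply (rule sets.sets_Collect_countable_All'[OF _ countable_rat])
  apply (rule sets.sets_Collect_countable_All'[OF _ countable_rat])
  apply (rule sets_Collect_const_imp)+
  by measurable

lemma Eset_sets: "Eset t k \<in> sets Msk"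
proof -
  have "Eset t k = {x\<in>space Msk. Conv t k x} \<inter> {x\<in>space Msk. JCp (Ht t k x) x}"
    by (auto simp: Eset_def space_Msk)
  then show ?thesis using Conv_sets JC_sets by auto
qed

definition lft :: "(real \<Rightarrow> real) \<Rightarrow> real \<Rightarrow> real" where
  "lft H u = Sup (H ` {..<u})"

lemma lft_bdd: "mono H \<Longrightarrow> bdd_above (H ` {..<u})"
  by (rule bdd_aboveI2[of _ _ "H u"]) (auto intro: monoD)

lemma lft_ge: "mono H \<Longrightarrow> v < u \<Longrightarrow> H v \<le> lft H u"
  unfolding lft_def by (rule cSUP_upper[OF _ lft_bdd]) auto

lemma lft_le: "mono H \<Longrightarrow> lft H u \<le> H u"
  unfolding lft_def by (rule cSUP_least) (auto intro: monoD)

lemma lft_tendsto: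
  assumes H: "mono H"
  shows "(H \<longlongrightarrow> lft H u) (at_left u)"
proof (rule order_tendstoI)
  fix a assume "a < lft H u"
  then obtain v where v: "v < u" "a < H v"
    unfolding lft_def using less_cSUP_iff[OF _ lft_bdd[OF H]] by auto
  show "\<forall>\<^sub>F w in at_left u. a < H w"
    unfolding eventually_at_left_field using v
    by (intro exI[of _ v]) (auto intro: less_le_trans[OF _ monoD[OF H]])
next
  fix a assume a: "lft H u < a"
  show "\<forall>\<^sub>F w in at_left u. H w < a"
    unfolding eventually_at_left_field
    by (intro exI[of _ "u - 1"]) (use lft_ge[OF H] a in \<open>auto intro: le_less_trans\<close>)
qed

lemma finite_jumps_bound:
  assumes H: "mono H"
  shows "finite U \<Longrightarrow> U \<subseteq> {a<..b} \<Longrightarrow> a \<le> b \<Longrightarrow> (\<Sum>u\<in>U. H u - lft H u) \<le> H b - H a"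
proof (induction "card U" arbitrary: U b rule: less_induct)
  case less
  show ?case
  proof (cases "U = {}")
    case True then show ?thesis using less.prems H by (simp add: monoD)
  next
    case False
    define u0 where "u0 = Max U"
    have u0: "u0 \<in> U" "\<And>u. u \<in> U \<Longrightarrow> u \<le> u0" using False less.prems by (auto simp: u0_def)
    define U' where "U' = U - {u0}"
    define b' where "b' = Max (insert a U')"
    have fU': "finite U'" using less.prems by (simp add: U'_def)
    have b'a: "a \<le> b'" using fU' by (simp add: b'_def)
    have U'b: "U' \<subseteq> {a<..b'}"
    proof
      fix w assume w: "w \<in> U'"
      then have "a < w" using less.prems by (auto simp: U'_def)
      moreover have "w \<le> b'" using fU' w by (simp add: b'_def)
      ultimately show "w \<in> {a<..b'}" by simp
    qed
    have b'u0: "b' < u0"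
    proof -
      have "\<forall>w\<in>insert a U'. w < u0" using u0 less.prems by (force simp: U'_def)
      then show ?thesis using fU' by (simp add: b'_def)
    qed
    have cU': "card U' < card U" using u0 less.prems unfolding U'_def by (intro card_Diff1_less) auto
    have IH: "(\<Sum>u\<in>U'. H u - lft H u) \<le> H b' - H a"
      using less.hyps[OF cU' fU' U'b b'a] .
    have "(\<Sum>u\<in>U. H u - lft H u) = (H u0 - lft H u0) + (\<Sum>u\<in>U'. H u - lft H u)"
      using u0 less.prems by (simp add: U'_def sum.remove)
    also have "\<dots> \<le> (H u0 - H b') + (H b' - H a)"
      using IH lft_ge[OF H b'u0] by linarith
    also have "\<dots> \<le> H b - H a" using u0 less.prems monoD[OF H, of u0 b] by auto
    finally show ?thesis .
  qed
qed

lemma infsum_tail_left: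
  fixes g :: "real \<Rightarrow> real"
  assumes g0: "\<And>u. g u \<ge> 0" and sg: "g summable_on {0..u}" and u: "u > 0" and "e > 0"
  shows "\<forall>\<^sub>F v in at_left u. infsum g {v<..<u} < e"
proof -
  obtain F where F: "finite F" "F \<subseteq> {0..u}" "dist (sum g F) (infsum g {0..u}) \<le> e / 2"
    using infsum_finite_approximation[OF sg, of "e/2"] \<open>e > 0\<close> by auto
  define v0 where "v0 = Max (insert 0 (F \<inter> {..<u}))"
  have v0u: "v0 < u" using F(1) u by (simp add: v0_def)
  have v00: "v0 \<ge> 0" using F(1) by (simp add: v0_def)
  have "infsum g {v<..<u} < e" if v: "v0 < v" "v < u" for v
  proof -
    have disj: "F \<inter> {v<..<u} = {}"
    proof -
      have "w \<le> v0" if "w \<in> F" "w < u" for w using that F(1) by (simp add: v0_def)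
      then show ?thesis using v by force
    qed
    have sub: "{v<..<u} \<subseteq> {0..u}" using v v00 by auto
    have s1: "g summable_on {v<..<u}" by (rule summable_on_subset_banach[OF sg sub])
    have s2: "g summable_on (F \<union> {v<..<u})"
      by (rule summable_on_subset_banach[OF sg]) (use F(2) sub in auto)
    have "infsum g (F \<union> {v<..<u}) = sum g F + infsum g {v<..<u}"
      using infsum_Un_disjoint[OF _ s1 disj] F(1) by simp
    moreover have "infsum g (F \<union> {v<..<u}) \<le> infsum g {0..u}"
      by (rule infsum_mono_neutral[OF s2 sg]) (use F(2) sub g0 in auto)
    ultimately have "infsum g {v<..<u} \<le> infsum g {0..u} - sum g F" by linarith
    also have "\<dots> \<le> e / 2" using F(3) unfolding dist_real_def abs_le_iff by linarith
    finally show ?thesis using \<open>e > 0\<close> by simp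
  qed
  then show ?thesis unfolding eventually_at_left_field using v0u by blast
qed

lemma ev_at_left_gt: "a < u \<Longrightarrow> \<forall>\<^sub>F v in at_left u. a < v \<and> v < (u::real)"
  unfolding eventually_at_left_field by (intro exI[of _ a]) auto

lemma ev_witness:
  assumes "\<forall>\<^sub>F v in at_left (u::real). P v"
  obtains v where "P v"
proof -
  have "\<not> trivial_limit (at_left u)" by (simp add: trivial_limit_at_left_real)
  then show ?thesis using eventually_happens[OF assms] that by blast
qed

lemma jumpcond_iff:
  fixes H g :: "real \<Rightarrow> real"
  assumes H: "mono H" and rc: "\<And>a. continuous (at_right a) H"
    and g0: "\<And>u. g u \<ge> 0" and gneg: "\<And>u. u \<le> 0 \<Longrightarrow> g u = 0"
  shows "((\<forall>s\<ge>0. g summable_on {0..s}) \<and>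
          continuous_on {0..} (\<lambda>s. H s - infsum g {0..s}) \<and>
          mono_on {0..} (\<lambda>s. H s - infsum g {0..s}))
     \<longleftrightarrow> (\<forall>u>0. H u - lft H u = g u)"
proof -
  define D where "D s = H s - infsum g {0..s}" for s
  have split: "infsum g {0..s'} = infsum g {0..s} + infsum g {s<..s'}"
    if "0 \<le> s" "s \<le> s'" "g summable_on {0..s'}" for s s'
  proof -
    have e: "{0..s'} = {0..s} \<union> {s<..s'}" using that by auto
    show ?thesis unfolding e
      by (rule infsum_Un_disjoint; (rule summable_on_subset_banach[OF that(3)])?) (use that in auto)
  qed
  have split2: "infsum g {v<..s} = g s + infsum g {v<..<s}"
    if "0 \<le> v" "v < s" "g summable_on {0..s}" for v s
  proof -
    have e: "{v<..s} = insert s {v<..<s}" using that by auto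
    show ?thesis unfolding e
      by (rule infsum_insert) (use that in \<open>auto intro: summable_on_subset_banach[OF that(3)]\<close>)
  qed
  show ?thesis
  proof
    assume A: "(\<forall>s\<ge>0. g summable_on {0..s}) \<and>
          continuous_on {0..} (\<lambda>s. H s - infsum g {0..s}) \<and>
          mono_on {0..} (\<lambda>s. H s - infsum g {0..s})"
    then have summ: "\<And>s. s \<ge> 0 \<Longrightarrow> g summable_on {0..s}"
      and cont: "continuous_on {0..} D" by (auto simp: D_def)
    show "\<forall>u>0. H u - lft H u = g u"
    proof (intro allI impI)
      fix u :: real assume u: "u > 0"
      define z where "z = H u - lft H u - g u"
      have "\<bar>z\<bar> < 3 * e" if e: "e > 0" for e
      proof -
        obtain d where d: "d > 0" "\<And>v. v \<in> {0..} \<Longrightarrow> dist v u < d \<Longrightarrow> dist (D v) (D u) < e"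
          using cont u e unfolding continuous_on_iff by (metis atLeast_iff less_imp_le)
        have E1: "\<forall>\<^sub>F v in at_left u. max 0 (u - d) < v \<and> v < u"
          using u d by (intro ev_at_left_gt) auto
        have E3: "\<forall>\<^sub>F v in at_left u. dist (H v) (lft H u) < e"
          using lft_tendsto[OF H] e by (rule tendstoD)
        have E4: "\<forall>\<^sub>F v in at_left u. infsum g {v<..<u} < e"
          by (rule infsum_tail_left[OF g0 summ u e]) (use u in auto)
        obtain v where v: "max 0 (u - d) < v \<and> v < u" "dist (H v) (lft H u) < e"
          "infsum g {v<..<u} < e"
          using eventually_conj[OF E1 eventually_conj[OF E3 E4]] by (rule ev_witness) blast
        have v0: "0 \<le> v" "v < u" using v(1) by auto
        have Dv: "dist (D v) (D u) < e" using d(2)[of v] v(1) by (auto simp: dist_real_def)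
        have T0: "infsum g {v<..<u} \<ge> 0" by (rule infsum_nonneg) (use g0 in auto)
        have "D u - D v = H u - H v - g u - infsum g {v<..<u}"
          using split[OF v0(1) less_imp_le[OF v0(2)] summ] split2[OF v0 summ] u v0
          unfolding D_def by simp
        then have "z = (D u - D v) - (lft H u - H v) + infsum g {v<..<u}"
          unfolding z_def by simp
        moreover have "lft H u - H v \<ge> 0" using lft_ge[OF H v0(2)] by simp
        ultimately show ?thesis using Dv v(2) v(3) T0
          unfolding dist_real_def abs_less_iff by linarith
      qed
      then have "z = 0"
      proof (rule_tac ccontr)
        assume z3: "\<And>e. e > 0 \<Longrightarrow> \<bar>z\<bar> < 3 * e" and "z \<noteq> 0"
        then have "\<bar>z\<bar> < 3 * (\<bar>z\<bar> / 3)" using z3[of "\<bar>z\<bar> / 3"] by simp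
        then show False by simp
      qed
      then show "H u - lft H u = g u" by (simp add: z_def)
    qed
  next
    assume Dj: "\<forall>u>0. H u - lft H u = g u"
    have fin: "sum g U \<le> H b - H a" if "finite U" "U \<subseteq> {a<..b}" "0 \<le> a" "a \<le> b" for U a b
    proof -
      have "sum g U = (\<Sum>u\<in>U. H u - lft H u)"
        using that Dj by (intro sum.cong) auto
      also have "\<dots> \<le> H b - H a" by (rule finite_jumps_bound[OF H that(1,2,4)])
      finally show ?thesis .
    qed
    have summ: "g summable_on {0..s}" if s: "s \<ge> 0" for s
    proof (rule nonneg_bdd_above_summable_on)
      show "bdd_above (sum g ` {F. F \<subseteq> {0..s} \<and> finite F})"
      proof (rule bdd_aboveI2)
        fix F assume F: "F \<in> {F. F \<subseteq> {0..s} \<and> finite F}"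
        have "sum g F = sum g (F - {0})"
          using F gneg by (intro sum.mono_neutral_right) auto
        also have "\<dots> \<le> H s - H 0" using F s by (intro fin) auto
        finally show "sum g F \<le> H s - H 0" .
      qed
    qed (use g0 in auto)
    have bnd1: "infsum g {s<..s'} \<le> H s' - H s" if "0 \<le> s" "s \<le> s'" for s s'
      by (rule infsum_le_finite_sums[OF summable_on_subset_banach[OF summ[of s']]])
         (use that in \<open>auto intro: fin\<close>)
    have bnd2: "infsum g {v<..<s} \<le> lft H s - H v" if "0 \<le> v" "v < s" for v s
    proof (rule infsum_le_finite_sums[OF summable_on_subset_banach[OF summ[of s]]])
      show "{v<..<s} \<subseteq> {0..s}" using that by auto
      fix F assume F: "finite F" "F \<subseteq> {v<..<s}"
      show "sum g F \<le> lft H s - H v"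
      proof (cases "F = {}")
        case True then show ?thesis using lft_ge[OF H that(2)] by simp
      next
        case False
        define m where "m = Max F"
        have m0: "m \<in> F" using F False by (simp add: m_def)
        have m: "m \<in> F" "m < s" "v < m" using m0 F by auto
        have Fm: "F \<subseteq> {v<..m}"
        proof
          fix w assume "w \<in> F"
          then show "w \<in> {v<..m}" using F Max_ge[OF F(1), of w] by (auto simp: m_def)
        qed
        have "sum g F \<le> H m - H v" using m that by (intro fin[OF F(1) Fm]) auto
        also have "\<dots> \<le> lft H s - H v" using lft_ge[OF H m(2)] by simp
        finally show ?thesis .
      qed
    qed (use that in auto)
    have T0: "infsum g A \<ge> 0" for A by (rule infsum_nonneg) (use g0 in auto)
    have Dright: "0 \<le> D s' - D s \<and> D s' - D s \<le> H s' - H s" if "0 \<le> s" "s \<le> s'" for s s'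
      using split[OF that summ] bnd1[OF that] T0[of "{s<..s'}"] that unfolding D_def by simp
    have Dleft: "0 \<le> D s - D v \<and> D s - D v \<le> lft H s - H v" if "0 \<le> v" "v < s" for v s
    proof -
      have "D s - D v = H s - H v - g s - infsum g {v<..<s}"
        using split[OF that(1) less_imp_le[OF that(2)] summ] split2[OF that summ] that
        unfolding D_def by simp
      also have "\<dots> = lft H s - H v - infsum g {v<..<s}"
        using Dj[rule_format, of s] that by simp
      finally show ?thesis using bnd2[OF that] T0[of "{v<..<s}"] by simp
    qed
    have "mono_on {0..} D"
    proof (rule mono_onI)
      fix r s :: real assume "r \<in> {0..}" "s \<in> {0..}" "r \<le> s"
      then show "D r \<le> D s" using Dright[of r s] by simp
    qed
    moreover have "continuous_on {0..} D"
      unfolding continuous_on_iff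
    proof (intro ballI allI impI)
      fix s e :: real assume s: "s \<in> {0..}" and e: "e > 0"
      have "(H \<longlongrightarrow> H s) (at_right s)" using rc[of s] by (simp add: continuous_within)
      then have "\<forall>\<^sub>F w in at_right s. dist (H w) (H s) < e" using e by (rule tendstoD)
      then obtain b where b: "s < b" "\<And>w. s < w \<Longrightarrow> w < b \<Longrightarrow> dist (H w) (H s) < e"
        unfolding eventually_at_right_field by blast
      obtain c where c: "c < s" "\<And>w. c < w \<Longrightarrow> w < s \<Longrightarrow> 0 \<le> w \<Longrightarrow> lft H s - H w < e"
      proof (cases "s > 0")
        case True
        have "\<forall>\<^sub>F w in at_left s. dist (H w) (lft H s) < e"
          using lft_tendsto[OF H] e by (rule tendstoD)
        then obtain c where c: "c < s" "\<And>w. c < w \<Longrightarrow> w < s \<Longrightarrow> dist (H w) (lft H s) < e"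
          unfolding eventually_at_left_field by blast
        have "lft H s - H w < e" if "c < w" "w < s" for w
          using c(2)[OF that] unfolding dist_real_def abs_less_iff by linarith
        then show ?thesis using c(1) by (intro that[of c]) auto
      next
        case False
        then show ?thesis using s by (intro that[of "s - 1"]) auto
      qed
      show "\<exists>d>0. \<forall>w\<in>{0..}. dist w s < d \<longrightarrow> dist (D w) (D s) < e"
      proof (intro exI[of _ "min (b - s) (s - c)"] conjI ballI impI)
        show "min (b - s) (s - c) > 0" using b c by simp
        fix w assume w: "w \<in> {0..}" "dist w s < min (b - s) (s - c)"
        consider "w < s" | "w = s" | "w > s" by linarith
        then show "dist (D w) (D s) < e"
        proof cases
          case 1
          then have "lft H s - H w < e" using c(2)[of w] w by (auto simp: dist_real_def)
          then show ?thesis using Dleft[of w s] 1 w by (auto simp: dist_real_def)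
        next
          case 2 then show ?thesis using e by simp
        next
          case 3
          then have "dist (H w) (H s) < e" using b(2)[of w] w by (auto simp: dist_real_def)
          then show ?thesis using Dright[of s w] 3 s by (auto simp: dist_real_def)
        qed
      qed
    qed
    ultimately show "(\<forall>s\<ge>0. g summable_on {0..s}) \<and>
          continuous_on {0..} (\<lambda>s. H s - infsum g {0..s}) \<and>
          mono_on {0..} (\<lambda>s. H s - infsum g {0..s})"
      using summ unfolding D_def by auto
  qed
qed

lemma sq_diff_bound:
  fixes d e \<rho> :: real
  assumes "\<bar>e\<bar> \<le> 2 * \<rho>" "\<rho> \<le> 1"
  shows "\<bar>(d + e)\<^sup>2 - d\<^sup>2\<bar> \<le> \<rho> * (4 * \<bar>d\<bar> + 4)"
proof -
  have "(d + e)\<^sup>2 - d\<^sup>2 = e * (2 * d + e)" by (simp add: power2_eq_square algebra_simps)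
  then have "\<bar>(d + e)\<^sup>2 - d\<^sup>2\<bar> = \<bar>e\<bar> * \<bar>2 * d + e\<bar>" by (simp add: abs_mult)
  also have "\<dots> \<le> (2 * \<rho>) * (2 * \<bar>d\<bar> + 2)"
  proof (rule mult_mono)
    show "\<bar>2 * d + e\<bar> \<le> 2 * \<bar>d\<bar> + 2" using assms by (simp add: abs_le_iff) linarith
  qed (use assms in auto)
  also have "\<dots> = \<rho> * (4 * \<bar>d\<bar> + 4)" by (simp add: algebra_simps)
  finally show ?thesis .
qed

lemma cadlag_left_tendsto:
  assumes x: "x \<in> cadlag" and u: "u > 0"
  shows "(x \<longlongrightarrow> Lim (at_left u) x) (at_left u)"
proof -
  obtain l where l: "(x \<longlongrightarrow> l) (at_left u)" using x u by (auto simp: cadlag_def)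
  have "Lim (at_left u) x = l" by (rule tendsto_Lim[OF _ l]) (simp add: trivial_limit_at_left_real)
  then show ?thesis using l by simp
qed

lemma gauge:
  assumes x: "x \<in> cadlag" and H: "mono H" and rc: "\<And>a. continuous (at_right a) H"
    and u: "u \<ge> 0" and eta: "\<eta> > 0"
  shows "\<exists>\<delta>>0. \<forall>a b. 0 < a \<longrightarrow> a < b \<longrightarrow> a \<in> ball u \<delta> \<longrightarrow> b \<in> ball u \<delta> \<longrightarrow>
     \<bar>H b - H a - (x b - x a)\<^sup>2 - (if a < u \<and> u \<le> b then H u - lft H u - (jump x u)\<^sup>2 else 0)\<bar> < \<eta>"
proof -
  define xl where "xl = Lim (at_left u) x"
  define \<Delta> where "\<Delta> = x u - xl"
  define \<rho> where "\<rho> = min 1 (\<eta> / (7 + 4 * \<bar>\<Delta>\<bar>))"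
  have pos: "7 + 4 * \<bar>\<Delta>\<bar> > 0" by simp
  have r1: "\<rho> \<le> \<eta> / (7 + 4 * \<bar>\<Delta>\<bar>)" by (simp add: \<rho>_def)
  have "\<rho> * (7 + 4 * \<bar>\<Delta>\<bar>) \<le> (\<eta> / (7 + 4 * \<bar>\<Delta>\<bar>)) * (7 + 4 * \<bar>\<Delta>\<bar>)"
    by (rule mult_right_mono[OF r1]) simp
  also have "\<dots> = \<eta>" using pos by simp
  finally have rho: "\<rho> > 0" "\<rho> \<le> 1" "\<rho> * (7 + 4 * \<bar>\<Delta>\<bar>) \<le> \<eta>"
    using eta pos by (auto simp: \<rho>_def)
  have rcx: "(x \<longlongrightarrow> x u) (at_right u)" using x u by (auto simp: cadlag_def continuous_within)
  have rcH: "(H \<longlongrightarrow> H u) (at_right u)" using rc[of u] by (simp add: continuous_within)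
  have "\<forall>\<^sub>F v in at_right u. dist (x v) (x u) < \<rho> \<and> dist (H v) (H u) < \<rho>"
    using tendstoD[OF rcx rho(1)] tendstoD[OF rcH rho(1)] by (rule eventually_conj)
  then obtain b1 where b1: "u < b1" "\<And>v. u < v \<Longrightarrow> v < b1 \<Longrightarrow> dist (x v) (x u) < \<rho> \<and> dist (H v) (H u) < \<rho>"
    unfolding eventually_at_right_field by blast
  have R: "\<bar>x v - x u\<bar> < \<rho> \<and> 0 \<le> H v - H u \<and> H v - H u < \<rho>" if "u \<le> v" "v < b1" for v
  proof (cases "v = u")
    case True then show ?thesis using rho by simp
  next
    case False then show ?thesis using b1(2)[of v] that monoD[OF H that(1)]
      by (auto simp: dist_real_def)
  qed
  obtain c1 where c1: "c1 < u" "\<And>v. c1 < v \<Longrightarrow> v < u \<Longrightarrow> 0 < v \<Longrightarrow>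
      \<bar>x v - xl\<bar> < \<rho> \<and> 0 \<le> lft H u - H v \<and> lft H u - H v < \<rho>"
  proof (cases "u > 0")
    case True
    have "\<forall>\<^sub>F v in at_left u. dist (x v) xl < \<rho> \<and> dist (H v) (lft H u) < \<rho>"
      using tendstoD[OF cadlag_left_tendsto[OF x True] rho(1)] tendstoD[OF lft_tendsto[OF H] rho(1)]
      unfolding xl_def by (rule eventually_conj)
    then obtain c where c: "c < u" "\<And>v. c < v \<Longrightarrow> v < u \<Longrightarrow> dist (x v) xl < \<rho> \<and> dist (H v) (lft H u) < \<rho>"
      unfolding eventually_at_left_field by blast
    show ?thesis
    proof (rule that[OF c(1)])
      fix v assume v: "c < v" "v < u"
      show "\<bar>x v - xl\<bar> < \<rho> \<and> 0 \<le> lft H u - H v \<and> lft H u - H v < \<rho>"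
        using c(2)[OF v] lft_ge[OF H v(2)] by (auto simp: dist_real_def)
    qed
  next
    case False then show ?thesis using u by (intro that[of "u - 1"]) auto
  qed
  show ?thesis
  proof (intro exI[of _ "min (b1 - u) (u - c1)"] conjI allI impI)
    show "min (b1 - u) (u - c1) > 0" using b1 c1 by simp
    fix a b :: real
    assume ab: "0 < a" "a < b" "a \<in> ball u (min (b1 - u) (u - c1))" "b \<in> ball u (min (b1 - u) (u - c1))"
    then have a1: "c1 < a" "a < b1" and b2: "c1 < b" "b < b1" by (auto simp: dist_real_def)
    consider "b < u" | "u \<le> a" | "a < u \<and> u \<le> b" by linarith
    then show "\<bar>H b - H a - (x b - x a)\<^sup>2 - (if a < u \<and> u \<le> b then H u - lft H u - (jump x u)\<^sup>2 else 0)\<bar> < \<eta>"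
    proof cases
      case 1
      have A: "\<bar>x a - xl\<bar> < \<rho> \<and> 0 \<le> lft H u - H a \<and> lft H u - H a < \<rho>"
        using c1(2)[of a] a1 ab 1 by auto
      have B: "\<bar>x b - xl\<bar> < \<rho> \<and> 0 \<le> lft H u - H b \<and> lft H u - H b < \<rho>"
        using c1(2)[of b] b2 ab 1 by auto
      have e: "\<bar>x b - x a\<bar> \<le> 2 * \<rho>" using A B by (simp add: abs_le_iff abs_less_iff, linarith?)
      have "\<bar>(0 + (x b - x a))\<^sup>2 - 0\<^sup>2\<bar> \<le> \<rho> * (4 * \<bar>0\<bar> + 4)" by (rule sq_diff_bound[OF e rho(2)])
      then have "(x b - x a)\<^sup>2 \<le> 4 * \<rho>" by simp
      moreover have "\<bar>H b - H a\<bar> < 2 * \<rho>" using A B by (simp add: abs_less_iff, linarith?)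
      moreover have "6 * \<rho> < \<eta>"
      proof -
        have "\<rho> * 7 \<le> \<rho> * (7 + 4 * \<bar>\<Delta>\<bar>)" using rho(1) by (intro mult_left_mono) auto
        then show ?thesis using rho by linarith
      qed
      moreover have "(x b - x a)\<^sup>2 \<ge> 0" by simp
      ultimately have "\<bar>H b - H a - (x b - x a)\<^sup>2\<bar> < \<eta>" unfolding abs_less_iff by linarith
      then show ?thesis using 1 by simp
    next
      case 2
      have A: "\<bar>x a - x u\<bar> < \<rho> \<and> 0 \<le> H a - H u \<and> H a - H u < \<rho>" using R[of a] 2 a1 by auto
      have B: "\<bar>x b - x u\<bar> < \<rho> \<and> 0 \<le> H b - H u \<and> H b - H u < \<rho>" using R[of b] 2 ab b2 by auto
      have e: "\<bar>x b - x a\<bar> \<le> 2 * \<rho>" using A B by (simp add: abs_le_iff abs_less_iff, linarith?)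
      have "\<bar>(0 + (x b - x a))\<^sup>2 - 0\<^sup>2\<bar> \<le> \<rho> * (4 * \<bar>0\<bar> + 4)" by (rule sq_diff_bound[OF e rho(2)])
      then have "(x b - x a)\<^sup>2 \<le> 4 * \<rho>" by simp
      moreover have "\<bar>H b - H a\<bar> < 2 * \<rho>" using A B by (simp add: abs_less_iff, linarith?)
      moreover have "6 * \<rho> < \<eta>"
      proof -
        have "\<rho> * 7 \<le> \<rho> * (7 + 4 * \<bar>\<Delta>\<bar>)" using rho(1) by (intro mult_left_mono) auto
        then show ?thesis using rho by linarith
      qed
      moreover have "(x b - x a)\<^sup>2 \<ge> 0" by simp
      ultimately have "\<bar>H b - H a - (x b - x a)\<^sup>2\<bar> < \<eta>" unfolding abs_less_iff by linarith
      then show ?thesis using 2 by simp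
    next
      case 3
      then have u0: "u > 0" using ab by simp
      have A: "\<bar>x a - xl\<bar> < \<rho> \<and> 0 \<le> lft H u - H a \<and> lft H u - H a < \<rho>"
        using c1(2)[of a] a1 ab 3 by auto
      have B: "\<bar>x b - x u\<bar> < \<rho> \<and> 0 \<le> H b - H u \<and> H b - H u < \<rho>" using R[of b] 3 b2 by auto
      have jx: "jump x u = \<Delta>" using u0 by (simp add: jump_def \<Delta>_def xl_def)
      define e where "e = (x b - x u) - (x a - xl)"
      have xe: "x b - x a = \<Delta> + e" by (simp add: e_def \<Delta>_def)
      have e: "\<bar>e\<bar> \<le> 2 * \<rho>" using A B unfolding e_def by (simp add: abs_le_iff abs_less_iff, linarith?)
      have sq: "\<bar>(\<Delta> + e)\<^sup>2 - \<Delta>\<^sup>2\<bar> \<le> \<rho> * (4 * \<bar>\<Delta>\<bar> + 4)" by (rule sq_diff_bound[OF e rho(2)])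
      have hh: "\<bar>(H b - H a) - (H u - lft H u)\<bar> < 2 * \<rho>" using A B by (simp add: abs_less_iff, linarith?)
      have "\<rho> * (4 * \<bar>\<Delta>\<bar> + 4) + 2 * \<rho> \<le> \<rho> * (7 + 4 * \<bar>\<Delta>\<bar>) - \<rho>" by (simp add: algebra_simps)
      then have "\<rho> * (4 * \<bar>\<Delta>\<bar> + 4) + 2 * \<rho> < \<eta>" using rho by linarith
      then have "\<bar>(H b - H a) - (\<Delta> + e)\<^sup>2 - (H u - lft H u - \<Delta>\<^sup>2)\<bar> < \<eta>"
        using sq hh unfolding abs_less_iff abs_le_iff by linarith
      then show ?thesis using 3 unfolding jx xe by simp
    qed
  qed
qed

lemma JCp_iff:
  assumes x: "x \<in> cadlag" and H: "mono H" and rc: "\<And>a. continuous (at_right a) H"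
  shows "JCp H x \<longleftrightarrow> (\<forall>u>0. H u - lft H u = (jump x u)\<^sup>2)"
proof
  assume Z: "\<forall>u>0. H u - lft H u = (jump x u)\<^sup>2"
  show "JCp H x" unfolding JCp_def
  proof (intro allI)
    fix N j :: nat
    define \<eta> :: real where "\<eta> = 1 / real (Suc j)"
    have eta: "\<eta> > 0" by (simp add: \<eta>_def)
    have "\<forall>u. \<exists>d. u \<ge> 0 \<longrightarrow> d > 0 \<and> (\<forall>a b. 0 < a \<longrightarrow> a < b \<longrightarrow> a \<in> ball u d \<longrightarrow> b \<in> ball u d \<longrightarrow>
     \<bar>H b - H a - (x b - x a)\<^sup>2 - (if a < u \<and> u \<le> b then H u - lft H u - (jump x u)\<^sup>2 else 0)\<bar> < \<eta>)"
      using gauge[OF x H rc _ eta] by blast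
    then obtain d where d: "\<And>u. u \<ge> 0 \<Longrightarrow> d u > 0"
      "\<And>u a b. u \<ge> 0 \<Longrightarrow> 0 < a \<Longrightarrow> a < b \<Longrightarrow> a \<in> ball u (d u) \<Longrightarrow> b \<in> ball u (d u) \<Longrightarrow>
     \<bar>H b - H a - (x b - x a)\<^sup>2 - (if a < u \<and> u \<le> b then H u - lft H u - (jump x u)\<^sup>2 else 0)\<bar> < \<eta>"
      by metis
    have d2: "\<bar>H b - H a - (x b - x a)\<^sup>2\<bar> < \<eta>"
      if "u \<ge> 0" "0 < a" "a < b" "a \<in> ball u (d u)" "b \<in> ball u (d u)" for u a b
    proof -
      have "(if a < u \<and> u \<le> b then H u - lft H u - (jump x u)\<^sup>2 else 0) = 0"
        using Z that by auto
      then show ?thesis using d(2)[OF that] by simp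
    qed
    obtain \<epsilon> where \<epsilon>: "\<epsilon> > 0" "\<And>y. y \<in> {0..real N} \<Longrightarrow> \<exists>G\<in>(\<lambda>u. ball u (d u)) ` {0..real N}. ball y \<epsilon> \<subseteq> G"
    proof (rule Heine_Borel_lemma[of "{0..real N}" "(\<lambda>u. ball u (d u)) ` {0..real N}"])
      show "{0..real N} \<subseteq> \<Union> ((\<lambda>u. ball u (d u)) ` {0..real N})"
        using d(1) by force
    qed auto
    obtain m where m: "1 / real (Suc m) < \<epsilon>" using nat_approx_posE[OF \<epsilon>(1)] by blast
    show "\<exists>m. \<forall>a\<in>\<rat>. \<forall>b\<in>\<rat>. 0 < a \<longrightarrow> a < b \<longrightarrow> b \<le> real N \<longrightarrow> b - a < 1 / real (Suc m) \<longrightarrow>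
        \<bar>H b - H a - (x b - x a)\<^sup>2\<bar> < 1 / real (Suc j)"
    proof (intro exI[of _ m] ballI impI)
      fix a b :: real assume ab: "0 < a" "a < b" "b \<le> real N" "b - a < 1 / real (Suc m)"
      then have "a \<in> {0..real N}" by simp
      then obtain u where u: "u \<in> {0..real N}" "ball a \<epsilon> \<subseteq> ball u (d u)" using \<epsilon>(2) by blast
      have "a \<in> ball a \<epsilon>" using \<epsilon>(1) by simp
      then have "a \<in> ball u (d u)" using u(2) by blast
      moreover have "b \<in> ball a \<epsilon>" using ab m by (simp add: dist_real_def)
      then have "b \<in> ball u (d u)" using u(2) by blast
      ultimately show "\<bar>H b - H a - (x b - x a)\<^sup>2\<bar> < 1 / real (Suc j)"
        using d2[of u a b] u(1) ab by (simp add: \<eta>_def)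
    qed
  qed
next
  assume JC: "JCp H x"
  show "\<forall>u>0. H u - lft H u = (jump x u)\<^sup>2"
  proof (intro allI impI, rule ccontr)
    fix u :: real assume u: "u > 0" and ne: "H u - lft H u \<noteq> (jump x u)\<^sup>2"
    define \<psi> where "\<psi> = H u - lft H u - (jump x u)\<^sup>2"
    define \<eta> where "\<eta> = \<bar>\<psi>\<bar> / 2"
    have eta: "\<eta> > 0" using ne by (simp add: \<eta>_def \<psi>_def)
    obtain j where j: "1 / real (Suc j) < \<eta>" using nat_approx_posE[OF eta] by blast
    obtain N :: nat where N: "u < real N" using reals_Archimedean2 by blast
    obtain m where m: "\<forall>a\<in>\<rat>. \<forall>b\<in>\<rat>. 0 < a \<longrightarrow> a < b \<longrightarrow> b \<le> real N \<longrightarrow>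
        b - a < 1 / real (Suc m) \<longrightarrow> \<bar>H b - H a - (x b - x a)\<^sup>2\<bar> < 1 / real (Suc j)"
      using JC unfolding JCp_def by blast
    obtain \<delta> where \<delta>: "\<delta> > 0" "\<And>a b. 0 < a \<Longrightarrow> a < b \<Longrightarrow> a \<in> ball u \<delta> \<Longrightarrow> b \<in> ball u \<delta> \<Longrightarrow>
     \<bar>H b - H a - (x b - x a)\<^sup>2 - (if a < u \<and> u \<le> b then H u - lft H u - (jump x u)\<^sup>2 else 0)\<bar> < \<eta>"
      using gauge[OF x H rc less_imp_le[OF u] eta] by blast
    define r where "r = min \<delta> (1 / (2 * real (Suc m)))"
    have r3: "r \<le> 1 / (2 * real (Suc m))" by (simp add: r_def)
    have "2 * (1 / (2 * real (Suc m))) = 1 / real (Suc m)" by (simp add: field_simps)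
    then have r: "r > 0" "r \<le> \<delta>" "2 * r \<le> 1 / real (Suc m)" using r3 by (auto simp: r_def \<delta>(1))
    obtain a where a: "a \<in> \<rat>" "max 0 (u - r) < a" "a < u"
      using Rats_dense_in_real[of "max 0 (u - r)" u] u r by auto
    obtain b where b: "b \<in> \<rat>" "u < b" "b < min (u + r) (real N)"
      using Rats_dense_in_real[of u "min (u + r) (real N)"] N r by auto
    have ab: "0 < a" "a < b" "b \<le> real N" "b - a < 1 / real (Suc m)" using a b r by auto
    have "\<bar>H b - H a - (x b - x a)\<^sup>2\<bar> < 1 / real (Suc j)" using m a(1) b(1) ab by blast
    moreover have "\<bar>H b - H a - (x b - x a)\<^sup>2 - \<psi>\<bar> < \<eta>"
    proof -
      have "a \<in> ball u \<delta>" "b \<in> ball u \<delta>" using a b r by (auto simp: dist_real_def)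
      then show ?thesis using \<delta>(2)[of a b] ab a(3) b(2) unfolding \<psi>_def by simp
    qed
    ultimately have "\<bar>\<psi>\<bar> < 2 * \<eta>" using j unfolding abs_less_iff by linarith
    then show False by (simp add: \<eta>_def)
  qed
qed

locale dfun =
  fixes H :: "real \<Rightarrow> real"
  assumes H_mono: "mono H" and H_rc: "\<And>a. continuous (at_right a) H" and H_neg: "\<And>s. s < 0 \<Longrightarrow> H s = 0"
begin

abbreviation "\<mu> \<equiv> interval_measure H"

lemma H_nonneg: "H s \<ge> 0"
proof -
  have "H (min s (-1)) \<le> H s" by (rule monoD[OF H_mono]) simp
  moreover have "H (min s (-1)) = 0" by (rule H_neg) simp
  ultimately show ?thesis by simp
qed

lemma mono': "x \<le> y \<Longrightarrow> H x \<le> H y" by (rule monoD[OF H_mono])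

lemma em_Ioc: "a \<le> b \<Longrightarrow> emeasure \<mu> {a<..b} = H b - H a"
  by (rule emeasure_interval_measure_Ioc) (use mono' H_rc in auto)

lemma me_Ioc: "a \<le> b \<Longrightarrow> measure \<mu> {a<..b} = H b - H a"
  by (rule measure_interval_measure_Ioc) (use mono' H_rc in auto)

lemma em_null: assumes c: "c < 0" shows "emeasure \<mu> {..c} = 0"
proof -
  have "{..c} = (\<Union>n. {c - real n<..c})"
  proof (intro equalityI subsetI)
    fix s assume "s \<in> {..c}"
    obtain n :: nat where "c - s < real n" using reals_Archimedean2 by blast
    then have "s \<in> {c - real n<..c}" using \<open>s \<in> {..c}\<close> by auto
    then show "s \<in> (\<Union>n. {c - real n<..c})" by blast
  qed auto
  moreover have "emeasure \<mu> (\<Union>n. {c - real n<..c}) = 0"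
  proof (rule emeasure_UN_eq_0)
    fix n :: nat
    show "emeasure \<mu> {c - real n<..c} = 0" using c H_neg[of c] H_neg[of "c - real n"] by (simp add: em_Ioc)
  qed auto
  ultimately show ?thesis by simp
qed

lemma em_atMost: "emeasure \<mu> {..s} = ennreal (H s)"
proof (cases "s < 0")
  case True then show ?thesis using em_null H_neg by simp
next
  case False
  have "emeasure \<mu> {..-1} + emeasure \<mu> {-1<..s} = emeasure \<mu> ({..-1} \<union> {-1<..s})"
    by (rule plus_emeasure) auto
  moreover have "{..-1} \<union> {-1<..s} = {..s}" using False by auto
  ultimately have "emeasure \<mu> {..s} = emeasure \<mu> {-1<..s}" using em_null[of "-1"] by simp
  also have "\<dots> = H s - H (-1)" using False by (simp add: em_Ioc)
  finally show ?thesis using H_neg[of "-1"] by simp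
qed

lemma em_lessThan0: "emeasure \<mu> {..<0} = 0"
proof -
  have "{..<(0::real)} = (\<Union>n. {..- 1 / real (Suc n)})"
  proof (intro equalityI subsetI)
    fix s :: real assume "s \<in> {..<0}"
    then have "- s > 0" by simp
    then obtain n where "1 / real (Suc n) < - s" by (rule nat_approx_posE)
    then have "s \<in> {..- 1 / real (Suc n)}" by simp
    then show "s \<in> (\<Union>n. {..- 1 / real (Suc n)})" by blast
  next
    fix s assume "s \<in> (\<Union>n. {..- 1 / real (Suc n)})"
    then obtain n where "s \<le> - 1 / real (Suc n)" by auto
    moreover have "- 1 / real (Suc n) < 0" by simp
    ultimately show "s \<in> {..<0}" by (metis lessThan_iff order_le_less_trans)
  qed
  moreover have "emeasure \<mu> (\<Union>n. {..- 1 / real (Suc n)}) = 0"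
    by (rule emeasure_UN_eq_0) (auto intro!: em_null)
  ultimately show ?thesis by simp
qed

lemma em_Icc0: assumes s: "s \<ge> 0" shows "emeasure \<mu> {0..s} = ennreal (H s)"
proof -
  have "emeasure \<mu> {..<0} + emeasure \<mu> {0..s} = emeasure \<mu> ({..<0} \<union> {0..s})"
    by (rule plus_emeasure) auto
  moreover have "{..<0} \<union> {0..s} = {..s}" using s by auto
  ultimately show ?thesis using em_lessThan0 em_atMost by simp
qed

lemma me_Icc0: "s \<ge> 0 \<Longrightarrow> measure \<mu> {0..s} = H s"
  using em_Icc0 H_nonneg by (simp add: measure_def)

lemma me_atMost: "measure \<mu> {..s} = H s"
  using em_atMost H_nonneg by (simp add: measure_def)

lemma em_Icc0_fin: "emeasure \<mu> {0..T} < \<infinity>"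
proof (cases "T \<ge> 0")
  case True then show ?thesis by (simp add: em_Icc0)
next
  case False then show ?thesis by simp
qed

lemma em_atMost_fin: "emeasure \<mu> {..T} < \<infinity>" by (simp add: em_atMost)

lemma em_Ioc_fin: "emeasure \<mu> {a<..b} < \<infinity>"
proof (cases "a \<le> b")
  case True then show ?thesis by (simp add: em_Ioc)
next
  case False then show ?thesis by simp
qed

end

context dfun begin

lemma exists_cont_point:
  assumes "a < b" shows "\<exists>c\<in>{a<..<b}. isCont H c"
proof (rule ccontr)
  assume "\<not> ?thesis"
  then have "{a<..<b} \<subseteq> {c. \<not> isCont H c}" by auto
  moreover have "countable {c. \<not> isCont H c}" by (rule mono_ctble_discont[OF H_mono])
  ultimately have "countable {a<..<b}" by (rule countable_subset)
  then show False using assms uncountable_open_interval by blast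
qed

lemma grid:
  assumes h: "h > 0"
  obtains p where "strict_mono p" "p 0 = - h / 2"
    "\<And>j. j > 0 \<Longrightarrow> isCont H (p j) \<and> p j > 0"
    "\<And>j. p (Suc j) - p j < 2 * h"
    "\<And>j. real j * h - h / 2 \<le> p j \<and> p j \<le> real j * h"
proof -
  have "\<forall>j. \<exists>c. c \<in> {(real j + 1/2) * h<..<(real j + 1) * h} \<and> isCont H c"
  proof
    fix j
    have "(real j + 1/2) * h < (real j + 1) * h" using h by (intro mult_strict_right_mono) auto
    from exists_cont_point[OF this] obtain c where
      "c \<in> {(real j + 1/2) * h<..<(real j + 1) * h}" "isCont H c" by (elim bexE)
    then show "\<exists>c. c \<in> {(real j + 1/2) * h<..<(real j + 1) * h} \<and> isCont H c"
      by (intro exI[of _ c]) simp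
  qed
  from choice[OF this] obtain q where q0: "\<forall>j. q j \<in> {(real j + 1/2) * h<..<(real j + 1) * h} \<and> isCont H (q j)"
    by (elim exE)
  then have q: "\<And>j. q j \<in> {(real j + 1/2) * h<..<(real j + 1) * h} \<and> isCont H (q j)" by blast
  define p where "p j = (if j = 0 then - h / 2 else q (j - 1))" for j
  have pb: "real j * h - h / 2 \<le> p j \<and> p j \<le> real j * h" for j
  proof (cases j)
    case 0
    then have "p j = - h / 2" by (simp add: p_def)
    then show ?thesis using 0 h by simp
  next
    case (Suc i)
    have qi: "(real i + 1/2) * h < q i" "q i < (real i + 1) * h" using q[of i] by auto
    have rj: "real j = real i + 1" using Suc by simp
    have e1: "real j * h - h / 2 = (real i + 1/2) * h" unfolding rj by (simp add: algebra_simps)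
    have e2: "real j * h = (real i + 1) * h" unfolding rj by simp
    have "p j = q i" using Suc by (simp add: p_def)
    then show ?thesis using qi e1 e2 by linarith
  qed
  have pS: "p (Suc j) > (real j + 1/2) * h" for j using q[of j] by (simp add: p_def)
  show ?thesis
  proof (rule that[of p])
    show "strict_mono p"
    proof (rule strict_mono_Suc_iff[THEN iffD2], intro allI)
      fix j
      have "p j \<le> real j * h" using pb by blast
      also have "\<dots> < (real j + 1/2) * h" using h by (simp add: algebra_simps)
      finally show "p j < p (Suc j)" using pS[of j] by linarith
    qed
    show "p 0 = - h / 2" by (simp add: p_def)
    show "isCont H (p j) \<and> p j > 0" if jp: "j > 0" for j
    proof -
      obtain i where j: "j = Suc i" using gr0_implies_Suc[OF jp] by (elim exE)
      have qi: "(real i + 1/2) * h < q i" "isCont H (q i)" using q[of i] by auto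
      have "(real i + 1/2) * h > 0" using h by simp
      moreover have "p j = q i" using j by (simp add: p_def)
      ultimately show ?thesis using qi by simp
    qed
    show "p (Suc j) - p j < 2 * h" for j
    proof -
      have "p (Suc j) \<le> real (Suc j) * h" using pb by blast
      moreover have "real j * h - h / 2 \<le> p j" using pb by blast
      moreover have "real (Suc j) * h = real j * h + h" by (simp add: distrib_right)
      ultimately show ?thesis using h by linarith
    qed
    show "real j * h - h / 2 \<le> p j \<and> p j \<le> real j * h" for j by (rule pb)
  qed
qed

end

lemma locate:
  fixes p :: "nat \<Rightarrow> real"
  assumes p: "strict_mono p"
  shows "p 0 < s \<Longrightarrow> s \<le> p K \<Longrightarrow> \<exists>j<K. p j < s \<and> s \<le> p (Suc j)"
proof (induction K)
  case 0 then show ?case by simp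
next
  case (Suc K)
  show ?case
  proof (cases "s \<le> p K")
    case True
    then obtain j where "j < K" "p j < s" "s \<le> p (Suc j)" using Suc by auto
    then show ?thesis by (intro exI[of _ j]) auto
  next
    case False then show ?thesis using Suc.prems by (intro exI[of _ K]) auto
  qed
qed

lemma step_val:
  fixes p :: "nat \<Rightarrow> real" and c :: "nat \<Rightarrow> real"
  assumes p: "strict_mono p" and j: "j < K" "p j < s" "s \<le> p (Suc j)"
  shows "(\<Sum>l<K. c l * indicator {p l<..p (Suc l)} s) = c j"
proof -
  have "(\<Sum>l<K. c l * indicator {p l<..p (Suc l)} s) = c j * indicator {p j<..p (Suc j)} s +
      (\<Sum>l\<in>{..<K} - {j}. c l * indicator {p l<..p (Suc l)} s)"
    using j by (subst sum.remove[of _ j]) auto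
  also have "(\<Sum>l\<in>{..<K} - {j}. c l * indicator {p l<..p (Suc l)} s) = 0"
  proof (rule sum.neutral, intro ballI)
    fix l assume l: "l \<in> {..<K} - {j}"
    have "s \<notin> {p l<..p (Suc l)}"
    proof (cases "l < j")
      case True
      then have "p (Suc l) \<le> p j" using p by (simp add: strict_mono_less_eq)
      then show ?thesis using j by auto
    next
      case False
      then have "Suc j \<le> l" using l by auto
      then have "p (Suc j) \<le> p l" using p by (simp add: strict_mono_less_eq)
      then show ?thesis using j by auto
    qed
    then show "c l * indicator {p l<..p (Suc l)} s = 0" by simp
  qed
  finally show ?thesis using j by simp
qed

lemma step_zero:
  fixes p :: "nat \<Rightarrow> real" and c :: "nat \<Rightarrow> real"
  assumes p: "strict_mono p" and s: "s \<le> p 0 \<or> p K < s"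
  shows "(\<Sum>l<K. c l * indicator {p l<..p (Suc l)} s) = 0"
proof (rule sum.neutral, intro ballI)
  fix l assume l: "l \<in> {..<K}"
  have "p 0 \<le> p l" "p (Suc l) \<le> p K" using p l by (auto simp: strict_mono_less_eq)
  then have "s \<notin> {p l<..p (Suc l)}" using s by auto
  then show "c l * indicator {p l<..p (Suc l)} s = 0" by simp
qed

lemma ind_Ioc_diff:
  fixes p q t :: real
  shows "p \<le> q \<Longrightarrow> (indicator {p<..q} t :: real) = (if t \<le> q then 1 else 0) - (if t \<le> p then 1 else 0)"
  by (auto simp: indicator_def)

context dfun begin

lemma em_atMost_top: "emeasure \<mu> {..T} < top" by (simp add: em_atMost)

lemma em_Ioc_top: "emeasure \<mu> {a<..b} < top"
  by (cases "a \<le> b") (simp_all add: em_Ioc)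

lemma RS:
  fixes a T :: "nat \<Rightarrow> nat \<Rightarrow> real" and K :: "nat \<Rightarrow> nat" and f :: "real \<Rightarrow> real"
  assumes a0: "\<And>n i. a n i \<ge> 0" and T0: "\<And>n i. i < K n \<Longrightarrow> T n i \<ge> 0"
    and conv: "\<And>s. s > 0 \<Longrightarrow> isCont H s \<Longrightarrow>
       (\<lambda>n. \<Sum>i<K n. a n i * (if T n i \<le> s then 1 else 0)) \<longlonglongrightarrow> H s"
    and f: "continuous_on {0..} f" and fT: "\<And>s. s \<ge> Tf \<Longrightarrow> f s = 0"
  shows "(\<lambda>n. \<Sum>i<K n. a n i * f (T n i)) \<longlonglongrightarrow> integral\<^sup>L \<mu> (\<lambda>s. f (max 0 s))"
proof -
  define G where "G n s = (\<Sum>i<K n. a n i * (if T n i \<le> s then 1 else 0))" for n s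
  define F' where "F' s = f (max 0 s)" for s
  define T1 where "T1 = max Tf 1"
  have T1: "T1 \<ge> 1" "\<And>s. s \<ge> T1 \<Longrightarrow> F' s = 0" using fT by (auto simp: T1_def F'_def)
  have F'c: "continuous_on UNIV F'"
    unfolding F'_def by (rule continuous_on_compose2[OF f]) (auto intro!: continuous_intros)
  have uc: "\<exists>\<delta>>0. \<forall>s s'. dist s s' < \<delta> \<longrightarrow> dist (F' s) (F' s') < e" if e: "e > 0" for e
  proof -
    have "uniformly_continuous_on {-1..T1+1} F'"
      by (rule compact_uniformly_continuous[OF continuous_on_subset[OF F'c]]) auto
    then obtain d where d: "d > 0" "\<And>s s'. s \<in> {-1..T1+1} \<Longrightarrow> s' \<in> {-1..T1+1} \<Longrightarrow>
        dist s' s < d \<Longrightarrow> dist (F' s') (F' s) < e"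
      unfolding uniformly_continuous_on_def using e by metis
    show ?thesis
    proof (intro exI[of _ "min d 1"] conjI allI impI)
      show "min d 1 > 0" using d by simp
      fix s s' :: real assume ss: "dist s s' < min d 1"
      then have ss1: "\<bar>s - s'\<bar> < 1" by (simp add: dist_real_def)
      consider "s \<in> {-1..T1+1} \<and> s' \<in> {-1..T1+1}" | "s < -1 \<or> s' < -1" | "s > T1+1 \<or> s' > T1+1"
        by fastforce
      then show "dist (F' s) (F' s') < e"
      proof cases
        case 1 then show ?thesis using d(2)[of s' s] ss by simp
      next
        case 2
        then have "s < 0" "s' < 0" using ss1 by (auto simp: abs_less_iff)
        then have "F' s = F' s'" by (simp add: F'_def)
        then show ?thesis using e by simp
      next
        case 3
        then have "s \<ge> T1" "s' \<ge> T1" using ss1 by (auto simp: abs_less_iff)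
        then have "F' s = 0" "F' s' = 0" using T1 by auto
        then show ?thesis using e by simp
      qed
    qed
  qed
  obtain B where B: "B \<ge> 0" "\<And>s. \<bar>F' s\<bar> \<le> B"
  proof -
    have "bounded (F' ` {0..T1})"
      by (rule compact_imp_bounded[OF compact_continuous_image[OF continuous_on_subset[OF F'c]]]) auto
    then obtain B0 where B0: "\<And>y. y \<in> F' ` {0..T1} \<Longrightarrow> norm y \<le> B0" by (auto simp: bounded_iff)
    have "\<bar>F' s\<bar> \<le> max B0 0" for s
    proof -
      consider "s < 0" | "s \<in> {0..T1}" | "s > T1" by fastforce
      then show ?thesis
      proof cases
        case 1
        then have "F' s = F' 0" by (simp add: F'_def)
        moreover have "norm (F' 0) \<le> B0" using T1 by (intro B0) auto
        ultimately show ?thesis by simp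
      next
        case 2 then show ?thesis using B0[of "F' s"] by auto
      next
        case 3 then show ?thesis using T1 by simp
      qed
    qed
    then show ?thesis using that[of "max B0 0"] by simp
  qed
  have F'm: "F' \<in> borel_measurable \<mu>"
    by (subst measurable_cong_sets[OF sets_interval_measure refl]) (rule borel_measurable_continuous_onI[OF F'c])
  have i0: "integrable \<mu> (\<lambda>s. B * indicator {..T1} s)"
    by (intro integrable_mult_right integrable_real_indicator) (auto simp: em_atMost_top)
  have ae: "AE s in \<mu>. norm (F' s) \<le> norm (B * indicator {..T1} s :: real)"
  proof (rule AE_I2)
    fix s
    show "norm (F' s) \<le> norm (B * indicator {..T1} s :: real)"
    proof (cases "s \<le> T1")
      case True then show ?thesis using B by simp
    next
      case False then show ?thesis using T1 by simp
    qed
  qed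
  have intF': "integrable \<mu> F'" by (rule Bochner_Integration.integrable_bound[OF i0 F'm ae])
  have SF: "(\<Sum>i<K n. a n i * f (T n i)) = (\<Sum>i<K n. a n i * F' (T n i))" for n
    using T0 by (intro sum.cong) (auto simp: F'_def)
  have "(\<lambda>n. \<Sum>i<K n. a n i * F' (T n i)) \<longlonglongrightarrow> integral\<^sup>L \<mu> F'"
  proof (rule tendstoI)
    fix r :: real assume r: "r > 0"
    define C where "C = 2 * H (T1 + 1) + 3"
    have C: "C > 0" using H_nonneg[of "T1 + 1"] by (simp add: C_def)
    define \<epsilon> where "\<epsilon> = r / C"
    have eps: "\<epsilon> > 0" "\<epsilon> * C = r" using r C by (auto simp: \<epsilon>_def)
    obtain \<delta> where \<delta>: "\<delta> > 0" "\<And>s s'. dist s s' < \<delta> \<Longrightarrow> dist (F' s) (F' s') < \<epsilon>"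
      using uc[OF eps(1)] by blast
    define h where "h = min \<delta> 1 / 2"
    have h: "h > 0" "2 * h \<le> \<delta>" "2 * h \<le> 1" using \<delta> by (auto simp: h_def)
    obtain p where p: "strict_mono p" "p 0 = - h / 2"
      "\<And>j. j > 0 \<Longrightarrow> isCont H (p j) \<and> p j > 0"
      "\<And>j. p (Suc j) - p j < 2 * h"
      "\<And>j. real j * h - h / 2 \<le> p j \<and> p j \<le> real j * h"
      by (rule grid[OF h(1)]) iprover
    define K0 where "K0 = nat \<lceil>T1 / h\<rceil> + 1"
    have Th: "T1 / h > 0" using T1 h by simp
    have K0a: "real K0 \<ge> T1 / h + 1" and K0b: "real K0 \<le> T1 / h + 2"
    proof -
      have "real (nat \<lceil>T1 / h\<rceil>) = real_of_int \<lceil>T1 / h\<rceil>" using Th by simp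
      moreover have "T1 / h \<le> real_of_int \<lceil>T1 / h\<rceil>" "real_of_int \<lceil>T1 / h\<rceil> < T1 / h + 1" by linarith+
      ultimately show "real K0 \<ge> T1 / h + 1" "real K0 \<le> T1 / h + 2" by (auto simp: K0_def)
    qed
    have hT: "(T1 / h) * h = T1" using h by simp
    have pK1: "p K0 \<ge> T1"
    proof -
      have "(T1 / h + 1) * h \<le> real K0 * h" by (rule mult_right_mono[OF K0a]) (use h in auto)
      then show ?thesis using p(5)[of K0] hT h by (simp add: distrib_right)
    qed
    have pK2: "p K0 \<le> T1 + 1"
    proof -
      have "real K0 * h \<le> (T1 / h + 2) * h" by (rule mult_right_mono[OF K0b]) (use h in auto)
      then show ?thesis using p(5)[of K0] hT h by (simp add: distrib_right)
    qed
    have p0: "p 0 < 0" using p(2) h by simp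
    have pmono: "i \<le> j \<Longrightarrow> p i \<le> p j" for i j using p(1) by (simp add: strict_mono_less_eq)
    define c where "c j = F' (p j)" for j
    define \<phi> where "\<phi> s = (\<Sum>j<K0. c j * indicator {p j<..p (Suc j)} s)" for s
    have pw: "\<bar>F' s - \<phi> s\<bar> \<le> \<epsilon> * indicator {..p K0} s + \<bar>F' 0\<bar> * indicator {..p 0} s" for s
    proof -
      consider "s \<le> p 0" | "p 0 < s \<and> s \<le> p K0" | "p K0 < s" by linarith
      then show ?thesis
      proof cases
        case 1
        have "\<phi> s = 0" unfolding \<phi>_def using 1 by (intro step_zero[OF p(1)]) auto
        moreover have "F' s = F' 0" using 1 p0 by (simp add: F'_def)
        moreover have "s \<le> p K0" using 1 pmono[of 0 K0] by simp
        ultimately show ?thesis using eps 1 by simp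
      next
        case 2
        obtain j where j: "j < K0" "p j < s" "s \<le> p (Suc j)" using locate[OF p(1)] 2 by blast
        have "\<phi> s = c j" unfolding \<phi>_def by (rule step_val[OF p(1) j])
        moreover have "dist s (p j) < \<delta>" using p(4)[of j] j h by (simp add: dist_real_def)
        then have "dist (F' s) (F' (p j)) < \<epsilon>" by (rule \<delta>(2))
        ultimately have "\<bar>F' s - \<phi> s\<bar> < \<epsilon>" by (simp add: dist_real_def c_def)
        then show ?thesis using 2 by simp
      next
        case 3
        have "\<phi> s = 0" unfolding \<phi>_def using 3 by (intro step_zero[OF p(1)]) auto
        moreover have "F' s = 0" using 3 pK1 T1 by simp
        moreover have "\<not> s \<le> p 0" using 3 pmono[of 0 K0] by simp
        moreover have "\<not> s \<le> p K0" using 3 by simp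
        ultimately show ?thesis by simp
      qed
    qed
    have Gconv: "(\<lambda>n. G n (p j)) \<longlonglongrightarrow> H (p j)" for j
    proof (cases "j = 0")
      case True
      have "G n (p j) = 0" for n unfolding G_def
      proof (intro sum.neutral ballI)
        fix i assume "i \<in> {..<K n}"
        then have "T n i \<ge> 0" using T0 by simp
        then have "\<not> T n i \<le> p j" using True p0 by simp
        then show "a n i * (if T n i \<le> p j then 1 else 0) = 0" by simp
      qed
      then show ?thesis using True H_neg[OF p0] by simp
    next
      case False
      then show ?thesis unfolding G_def using p(3)[of j] by (intro conv) auto
    qed
    have Sphi: "(\<Sum>i<K n. a n i * \<phi> (T n i)) = (\<Sum>j<K0. c j * (G n (p (Suc j)) - G n (p j)))" for n
    proof -
      have "(\<Sum>i<K n. a n i * \<phi> (T n i)) = (\<Sum>i<K n. \<Sum>j<K0. c j * (a n i * indicator {p j<..p (Suc j)} (T n i)))"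
        unfolding \<phi>_def sum_distrib_left by (simp add: mult.left_commute)
      also have "\<dots> = (\<Sum>j<K0. \<Sum>i<K n. c j * (a n i * indicator {p j<..p (Suc j)} (T n i)))"
        by (rule sum.swap)
      also have "\<dots> = (\<Sum>j<K0. c j * (G n (p (Suc j)) - G n (p j)))"
      proof (rule sum.cong[OF refl])
        fix j assume "j \<in> {..<K0}"
        have le: "p j \<le> p (Suc j)" by (rule pmono) simp
        have "(\<Sum>i<K n. c j * (a n i * indicator {p j<..p (Suc j)} (T n i))) =
            c j * (\<Sum>i<K n. a n i * (if T n i \<le> p (Suc j) then 1 else 0) - a n i * (if T n i \<le> p j then 1 else 0))"
          unfolding ind_Ioc_diff[OF le] sum_distrib_left right_diff_distrib ..
        also have "\<dots> = c j * (G n (p (Suc j)) - G n (p j))"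
          unfolding G_def sum_subtractf ..
        finally show "(\<Sum>i<K n. c j * (a n i * indicator {p j<..p (Suc j)} (T n i))) = c j * (G n (p (Suc j)) - G n (p j))" .
      qed
      finally show ?thesis .
    qed
    have intInd: "integrable \<mu> (\<lambda>s. c j * indicator {p j<..p (Suc j)} s)" for j
      by (intro integrable_mult_right integrable_real_indicator) (auto simp: em_Ioc_top)
    have intphi: "integrable \<mu> \<phi>" unfolding \<phi>_def by (rule Bochner_Integration.integrable_sum) (rule intInd)
    have Iphi: "integral\<^sup>L \<mu> \<phi> = (\<Sum>j<K0. c j * (H (p (Suc j)) - H (p j)))"
    proof -
      have "integral\<^sup>L \<mu> \<phi> = (\<Sum>j<K0. integral\<^sup>L \<mu> (\<lambda>s. c j * indicator {p j<..p (Suc j)} s))"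
        unfolding \<phi>_def by (rule Bochner_Integration.integral_sum) (rule intInd)
      also have "\<dots> = (\<Sum>j<K0. c j * (H (p (Suc j)) - H (p j)))"
      proof (rule sum.cong[OF refl])
        fix j
        have le: "p j \<le> p (Suc j)" by (rule pmono) simp
        show "integral\<^sup>L \<mu> (\<lambda>s. c j * indicator {p j<..p (Suc j)} s) = c j * (H (p (Suc j)) - H (p j))"
          using me_Ioc[OF le] by simp
      qed
      finally show ?thesis .
    qed
    have Sphiconv: "(\<lambda>n. \<Sum>i<K n. a n i * \<phi> (T n i)) \<longlonglongrightarrow> integral\<^sup>L \<mu> \<phi>"
      unfolding Sphi Iphi by (intro tendsto_sum tendsto_mult tendsto_const tendsto_diff Gconv)
    have dsum: "\<bar>(\<Sum>i<K n. a n i * F' (T n i)) - (\<Sum>i<K n. a n i * \<phi> (T n i))\<bar> \<le> \<epsilon> * G n (p K0)" for n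
    proof -
      have "\<bar>(\<Sum>i<K n. a n i * F' (T n i)) - (\<Sum>i<K n. a n i * \<phi> (T n i))\<bar> =
          \<bar>\<Sum>i<K n. a n i * (F' (T n i) - \<phi> (T n i))\<bar>"
        by (simp add: sum_subtractf right_diff_distrib)
      also have "\<dots> \<le> (\<Sum>i<K n. \<bar>a n i * (F' (T n i) - \<phi> (T n i))\<bar>)" by (rule sum_abs)
      also have "\<dots> \<le> (\<Sum>i<K n. \<epsilon> * (a n i * (if T n i \<le> p K0 then 1 else 0)))"
      proof (rule sum_mono)
        fix i assume i: "i \<in> {..<K n}"
        have Tp: "\<not> T n i \<le> p 0" using T0[of i n] i p0 by auto
        have "\<bar>a n i * (F' (T n i) - \<phi> (T n i))\<bar> = a n i * \<bar>F' (T n i) - \<phi> (T n i)\<bar>"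
          using a0 by (simp add: abs_mult)
        also have "\<dots> \<le> a n i * (\<epsilon> * indicator {..p K0} (T n i) + \<bar>F' 0\<bar> * indicator {..p 0} (T n i))"
          by (rule mult_left_mono[OF pw a0])
        also have "\<dots> = \<epsilon> * (a n i * (if T n i \<le> p K0 then 1 else 0))"
          using Tp by (simp add: indicator_def)
        finally show "\<bar>a n i * (F' (T n i) - \<phi> (T n i))\<bar> \<le> \<epsilon> * (a n i * (if T n i \<le> p K0 then 1 else 0))" .
      qed
      also have "\<dots> = \<epsilon> * G n (p K0)" unfolding G_def sum_distrib_left ..
      finally show ?thesis .
    qed
    have dint: "\<bar>integral\<^sup>L \<mu> F' - integral\<^sup>L \<mu> \<phi>\<bar> \<le> \<epsilon> * H (p K0)"
    proof -
      have i1: "integrable \<mu> (\<lambda>s. \<epsilon> * indicator {..p K0} s + \<bar>F' 0\<bar> * indicator {..p 0} s)"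
        by (intro Bochner_Integration.integrable_add integrable_mult_right integrable_real_indicator) (auto simp: em_atMost_top)
      have "\<bar>integral\<^sup>L \<mu> F' - integral\<^sup>L \<mu> \<phi>\<bar> = \<bar>integral\<^sup>L \<mu> (\<lambda>s. F' s - \<phi> s)\<bar>"
        using intF' intphi by simp
      also have "\<dots> \<le> integral\<^sup>L \<mu> (\<lambda>s. \<epsilon> * indicator {..p K0} s + \<bar>F' 0\<bar> * indicator {..p 0} s)"
        by (rule integral_abs_bound_integral[OF Bochner_Integration.integrable_diff[OF intF' intphi] i1 pw])
      also have "\<dots> = \<epsilon> * H (p K0) + \<bar>F' 0\<bar> * H (p 0)"
        using me_atMost by (simp add: Bochner_Integration.integral_add em_atMost_top)
      also have "\<dots> = \<epsilon> * H (p K0)" using H_neg[OF p0] by simp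
      finally show ?thesis .
    qed
    have E1: "\<forall>\<^sub>F n in sequentially. dist (\<Sum>i<K n. a n i * \<phi> (T n i)) (integral\<^sup>L \<mu> \<phi>) < \<epsilon>"
      by (rule tendstoD[OF Sphiconv eps(1)])
    have E2: "\<forall>\<^sub>F n in sequentially. G n (p K0) < H (p K0) + 1"
      by (rule order_tendstoD(2)[OF Gconv]) simp
    show "\<forall>\<^sub>F n in sequentially. dist (\<Sum>i<K n. a n i * F' (T n i)) (integral\<^sup>L \<mu> F') < r"
      using E1 E2
    proof eventually_elim
      case (elim n)
      have g1: "\<epsilon> * G n (p K0) \<le> \<epsilon> * (H (p K0) + 1)"
        using elim(2) eps(1) by (intro mult_left_mono) auto
      have g2: "\<epsilon> * H (p K0) \<le> \<epsilon> * H (T1 + 1)"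
        using pK2 eps(1) by (intro mult_left_mono mono') auto
      have g3: "\<epsilon> * C = 2 * (\<epsilon> * H (T1 + 1)) + 3 * \<epsilon>" by (simp add: C_def algebra_simps)
      have g4: "\<epsilon> * (H (p K0) + 1) = \<epsilon> * H (p K0) + \<epsilon>" by (simp add: algebra_simps)
      show ?case using dsum[of n] dint elim(1) g1 g2 g3 g4 eps
        unfolding dist_real_def abs_le_iff abs_less_iff by linarith
    qed
  qed
  then show ?thesis unfolding SF F'_def .
qed

end

lemma gq_bounds: "0 \<le> gq q m s" "gq q m s \<le> 1" by (auto simp: gq_def)

lemma gq_one: assumes "s \<le> q" shows "gq q m s = 1"
proof -
  have "real (Suc m) * (s - q) \<le> 0" using assms by (intro mult_nonneg_nonpos) auto
  then show ?thesis by (simp add: gq_def)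
qed

lemma gq_zero:
  assumes "s \<ge> q + 1 / real (Suc m)" shows "gq q m s = 0"
proof -
  have "real (Suc m) * (s - q) \<ge> real (Suc m) * (1 / real (Suc m))"
    using assms by (intro mult_left_mono) auto
  then have "real (Suc m) * (s - q) \<ge> 1" by simp
  then show ?thesis by (simp add: gq_def)
qed

lemma gq_anti: "gq q (Suc m) s \<le> gq q m s"
proof (cases "s \<le> q")
  case True then show ?thesis by (simp add: gq_one)
next
  case False
  then have "real (Suc m) * (s - q) \<le> real (Suc (Suc m)) * (s - q)"
    by (intro mult_right_mono) auto
  then show ?thesis unfolding gq_def by (intro max.mono min.mono) auto
qed

lemma gq_mono_q: "q \<le> q' \<Longrightarrow> gq q m s \<le> gq q' m s"
proof -
  assume "q \<le> q'"
  then have "real (Suc m) * (s - q') \<le> real (Suc m) * (s - q)" by (intro mult_left_mono) auto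
  then show ?thesis unfolding gq_def by (intro max.mono min.mono) auto
qed

lemma gq_cont: "continuous_on A (gq q m)"
  unfolding gq_def by (intro continuous_intros)

lemma Sn_mono:
  assumes T0: "\<And>n i. i < k n \<Longrightarrow> t n i \<ge> 0" and fg: "\<And>s. s \<ge> 0 \<Longrightarrow> f s \<le> g s"
  shows "Sn t k f x n \<le> Sn t k g x n"
  unfolding Sn_def by (intro sum_mono mult_left_mono fg T0) auto

lemma Sn_nonneg:
  assumes "\<And>s. f s \<ge> 0" shows "Sn t k f x n \<ge> 0"
  unfolding Sn_def using assms by (intro sum_nonneg) auto

locale convx =
  fixes t :: "nat \<Rightarrow> nat \<Rightarrow> real" and k :: "nat \<Rightarrow> nat" and x :: "real \<Rightarrow> real"
  assumes T0: "\<And>n i. i < k n \<Longrightarrow> t n i \<ge> 0" and cv: "Conv t k x"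
begin

lemma Lq_lim: "q \<in> \<rat> \<Longrightarrow> q \<ge> 0 \<Longrightarrow> (\<lambda>n. Sn t k (gq q m) x n) \<longlonglongrightarrow> Lq t k q m x"
  using cv unfolding Conv_def Lq_def by (auto simp: convergent_LIMSEQ_iff)

lemma Lq_nonneg: "q \<in> \<rat> \<Longrightarrow> q \<ge> 0 \<Longrightarrow> Lq t k q m x \<ge> 0"
  by (rule LIMSEQ_le_const[OF Lq_lim]) (auto intro: Sn_nonneg gq_bounds)

lemma Lq_anti: "q \<in> \<rat> \<Longrightarrow> q \<ge> 0 \<Longrightarrow> Lq t k q (Suc m) x \<le> Lq t k q m x"
  by (rule LIMSEQ_le[OF Lq_lim Lq_lim]) (auto intro!: Sn_mono T0 gq_anti)

lemma Lq_mono: "q \<in> \<rat> \<Longrightarrow> q' \<in> \<rat> \<Longrightarrow> 0 \<le> q \<Longrightarrow> q \<le> q' \<Longrightarrow> Lq t k q m x \<le> Lq t k q' m x"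
  by (rule LIMSEQ_le[OF Lq_lim Lq_lim]) (auto intro!: Sn_mono T0 gq_mono_q)

lemma Fq_bdd: "q \<in> \<rat> \<Longrightarrow> q \<ge> 0 \<Longrightarrow> bdd_below (range (\<lambda>m. Lq t k q m x))"
  by (rule bdd_belowI2[of _ 0]) (auto intro: Lq_nonneg)

lemma Fq_nonneg: "q \<in> \<rat> \<Longrightarrow> q \<ge> 0 \<Longrightarrow> Fq t k q x \<ge> 0"
  unfolding Fq_def by (rule cINF_greatest) (auto intro: Lq_nonneg)

lemma Fq_le: "q \<in> \<rat> \<Longrightarrow> q \<ge> 0 \<Longrightarrow> Fq t k q x \<le> Lq t k q m x"
  unfolding Fq_def by (rule cINF_lower[OF Fq_bdd]) auto

lemma Fq_mono: "q \<in> \<rat> \<Longrightarrow> q' \<in> \<rat> \<Longrightarrow> 0 \<le> q \<Longrightarrow> q \<le> q' \<Longrightarrow> Fq t k q x \<le> Fq t k q' x"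
  unfolding Fq_def
  by (rule cINF_mono[OF _ Fq_bdd]) (auto intro: Lq_mono)

abbreviation "HH \<equiv> Ht t k x"

lemma Qset_ne: "{q\<in>\<rat>. (s::real) < q} \<noteq> {}"
proof -
  obtain q where "q \<in> \<rat>" "s < q" using Rats_dense_in_real[of s "s+1"] by auto
  then show ?thesis by auto
qed


lemma HH_bdd: "s \<ge> 0 \<Longrightarrow> bdd_below ((\<lambda>q. Fq t k q x) ` {q\<in>\<rat>. s < q})"
  by (rule bdd_belowI2[of _ 0]) (auto intro: Fq_nonneg)

lemma HH_pos: "s \<ge> 0 \<Longrightarrow> HH s = (INF q\<in>{q\<in>\<rat>. s < q}. Fq t k q x)"
  by (simp add: Ht_def)

lemma HH_nonneg: "HH s \<ge> 0"
proof (cases "s < 0")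
  case True then show ?thesis by (simp add: Ht_def)
next
  case False
  then have s: "s \<ge> 0" by simp
  have "(INF q\<in>{q\<in>\<rat>. s < q}. Fq t k q x) \<ge> 0"
    by (intro cINF_greatest Qset_ne) (use s in \<open>auto intro: Fq_nonneg\<close>)
  then show ?thesis using HH_pos[OF s] by simp
qed

lemma HH_neg: "s < 0 \<Longrightarrow> HH s = 0" by (simp add: Ht_def)

lemma HH_le_Fq: "0 \<le> s \<Longrightarrow> s < q \<Longrightarrow> q \<in> \<rat> \<Longrightarrow> HH s \<le> Fq t k q x"
  unfolding HH_pos by (rule cINF_lower[OF HH_bdd]) auto

lemma HH_approx:
  assumes s: "0 \<le> s" and e: "e > 0"
  shows "\<exists>q\<in>\<rat>. s < q \<and> Fq t k q x < HH s + e"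
proof -
  have "(INF q\<in>{q\<in>\<rat>. s < q}. Fq t k q x) < HH s + e" using s e by (simp add: HH_pos)
  then show ?thesis using cINF_less_iff[OF Qset_ne HH_bdd[OF s]] by auto
qed

lemma HH_mono: "mono HH"
proof (rule monoI)
  fix s s' :: real assume ss: "s \<le> s'"
  show "HH s \<le> HH s'"
  proof (cases "s < 0")
    case True then show ?thesis using HH_nonneg[of s'] by (simp add: HH_neg)
  next
    case False
    then have s0: "s \<ge> 0" "s' \<ge> 0" using ss by auto
    show ?thesis unfolding HH_pos[OF s0(1)] HH_pos[OF s0(2)]
      by (rule cINF_superset_mono[OF Qset_ne HH_bdd[OF s0(1)]]) (use ss in auto)
  qed
qed

lemma HH_rc_aux: "(HH \<longlongrightarrow> HH s) (at_right s)"
proof (rule tendstoI)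
  fix e :: real assume e: "e > 0"
  show "\<forall>\<^sub>F v in at_right s. dist (HH v) (HH s) < e"
  proof (cases "s < 0")
    case True
    show ?thesis unfolding eventually_at_right_field
      by (intro exI[of _ 0]) (use True e in \<open>auto simp: HH_neg\<close>)
  next
    case False
    then have s: "s \<ge> 0" by simp
    obtain q where q: "q \<in> \<rat>" "s < q" "Fq t k q x < HH s + e" using HH_approx[OF s e] by blast
    show ?thesis unfolding eventually_at_right_field
    proof (intro exI[of _ q] conjI allI impI)
      show "s < q" by (rule q(2))
      fix v assume v1: "s < v" and v2: "v < q"
      have v: "s < v \<and> v < q" using v1 v2 by simp
      have "HH s \<le> HH v" using v by (intro monoD[OF HH_mono]) simp
      moreover have "HH v \<le> Fq t k q x" using v s q by (intro HH_le_Fq) auto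
      ultimately show "dist (HH v) (HH s) < e" using q(3) by (simp add: dist_real_def)
    qed
  qed
qed

lemma HH_rc: "continuous (at_right s) HH"
  using HH_rc_aux by (simp add: continuous_within)

sublocale dfun HH
  by unfold_locales (auto intro: HH_mono HH_rc HH_neg)

definition "GG n s = (\<Sum>i<k n. (x (t n (Suc i)) - x (t n i))\<^sup>2 * (if t n i \<le> s then 1 else 0))"

lemma GG_conv:
  assumes s: "s > 0" and c: "isCont HH s"
  shows "(\<lambda>n. GG n s) \<longlonglongrightarrow> HH s"
proof (rule tendstoI)
  fix e :: real assume e: "e > 0"
  obtain q where q: "q \<in> \<rat>" "s < q" "Fq t k q x < HH s + e / 3" using HH_approx[of s "e/3"] s e by auto
  have "(INF m. Lq t k q m x) < HH s + e / 3" using q by (simp add: Fq_def)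
  then obtain m where m: "Lq t k q m x < HH s + e / 3"
    using cINF_less_iff[OF UNIV_not_empty Fq_bdd[OF q(1)]] q s by auto
  have up: "GG n s \<le> Sn t k (gq q m) x n" for n
    unfolding GG_def Sn_def
  proof (intro sum_mono mult_left_mono)
    fix i assume "i \<in> {..<k n}"
    show "(if t n i \<le> s then 1 else 0) \<le> gq q m (t n i)"
      using q(2) gq_bounds[of q m "t n i"] gq_one[of "t n i" q m] by auto
  qed simp
  have lim1: "(\<lambda>n. Sn t k (gq q m) x n) \<longlonglongrightarrow> Lq t k q m x" using Lq_lim q s by simp
  have "Lq t k q m x < HH s + e / 3 + e / 3" using m e by simp
  from order_tendstoD(2)[OF lim1 this]
  have E1: "\<forall>\<^sub>F n in sequentially. Sn t k (gq q m) x n < HH s + e / 3 + e / 3" .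
  have "(HH \<longlongrightarrow> HH s) (at_left s)" using c by (simp add: isCont_def filterlim_at_split)
  then have "\<forall>\<^sub>F v in at_left s. dist (HH v) (HH s) < e / 3" using e by (intro tendstoD) auto
  then obtain b where b: "b < s" "\<And>v. b < v \<Longrightarrow> v < s \<Longrightarrow> dist (HH v) (HH s) < e / 3"
    unfolding eventually_at_left_field by blast
  define v where "v = (max b 0 + s) / 2"
  have v: "b < v" "0 < v" "v < s" using b s by (auto simp: v_def)
  obtain r where r: "r \<in> \<rat>" "v < r" "r < s" using Rats_dense_in_real[OF v(3)] by auto
  obtain m' where m': "1 / real (Suc m') < s - r" using nat_approx_posE[of "s - r"] r by auto
  have Hv: "HH v > HH s - e / 3" using b(2)[OF v(1) v(3)] unfolding dist_real_def abs_less_iff by linarith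
  have "HH v \<le> Fq t k r x" using v r by (intro HH_le_Fq) auto
  also have "\<dots> \<le> Lq t k r m' x" using r v by (intro Fq_le) auto
  finally have rL: "HH s - e / 3 < Lq t k r m' x" using Hv by simp
  have lo: "Sn t k (gq r m') x n \<le> GG n s" for n
    unfolding GG_def Sn_def
  proof (intro sum_mono mult_left_mono)
    fix i assume "i \<in> {..<k n}"
    show "gq r m' (t n i) \<le> (if t n i \<le> s then 1 else 0)"
    proof (cases "t n i \<le> s")
      case True then show ?thesis using gq_bounds[of r m' "t n i"] by simp
    next
      case False then show ?thesis using gq_zero[of r m' "t n i"] m' by simp
    qed
  qed simp
  have lim2: "(\<lambda>n. Sn t k (gq r m') x n) \<longlonglongrightarrow> Lq t k r m' x" using Lq_lim r v by simp
  have "HH s - e / 3 - e / 3 < Lq t k r m' x" using rL e by simp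
  from order_tendstoD(1)[OF lim2 this]
  have E2: "\<forall>\<^sub>F n in sequentially. Sn t k (gq r m') x n > HH s - e / 3 - e / 3" .
  show "\<forall>\<^sub>F n in sequentially. dist (GG n s) (HH s) < e"
    using E1 E2
  proof eventually_elim
    case (elim n)
    then show ?case using up[of n] lo[of n] e by (simp add: dist_real_def abs_less_iff)
  qed
qed

end

locale lfm =
  fixes \<nu> :: "real measure"
  assumes sets_nu: "sets \<nu> = sets borel" and nu_neg: "emeasure \<nu> {..<0} = 0"
    and nu_fin: "\<And>T. emeasure \<nu> {0..T} < \<infinity>"
begin

definition Hn where "Hn s = measure \<nu> {..s}"

lemma space_nu: "space \<nu> = UNIV"
  using sets_eq_imp_space_eq[OF sets_nu] by simp

lemma nu_fin': "emeasure \<nu> {0..T} < top" using nu_fin[of T] by simp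

lemma em_atMost_nu: "emeasure \<nu> {..s} < top"
proof (cases "s < 0")
  case True
  have "emeasure \<nu> {..s} \<le> emeasure \<nu> {..<0}" using True by (intro emeasure_mono) (auto simp: sets_nu)
  then show ?thesis using nu_neg by simp
next
  case False
  have "emeasure \<nu> {..<0} + emeasure \<nu> {0..s} = emeasure \<nu> ({..<0} \<union> {0..s})"
    by (rule plus_emeasure) (auto simp: sets_nu)
  moreover have "{..<0} \<union> {0..s} = {..s}" using False by auto
  ultimately show ?thesis using nu_neg nu_fin'[of s] by simp
qed

lemma em_atMost_eq: "emeasure \<nu> {..s} = ennreal (Hn s)"
  unfolding Hn_def using em_atMost_nu[of s] by (intro emeasure_eq_ennreal_measure) (simp add: less_top)

lemma Hn_Icc0: assumes s: "s \<ge> 0" shows "Hn s = measure \<nu> {0..s}"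
proof -
  have "emeasure \<nu> {..<0} + emeasure \<nu> {0..s} = emeasure \<nu> ({..<0} \<union> {0..s})"
    by (rule plus_emeasure) (auto simp: sets_nu)
  moreover have "{..<0} \<union> {0..s} = {..s}" using s by auto
  ultimately have "emeasure \<nu> {..s} = emeasure \<nu> {0..s}" using nu_neg by simp
  then show ?thesis unfolding Hn_def measure_def by simp
qed

lemma Hn_neg: assumes "s < 0" shows "Hn s = 0"
proof -
  have "emeasure \<nu> {..s} \<le> emeasure \<nu> {..<0}" using assms by (intro emeasure_mono) (auto simp: sets_nu)
  then have "emeasure \<nu> {..s} = 0" using nu_neg by simp
  then show ?thesis unfolding Hn_def measure_def by simp
qed

lemma Hn_mono: "mono Hn"
proof (rule monoI)
  fix s s' :: real assume "s \<le> s'"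
  then show "Hn s \<le> Hn s'" unfolding Hn_def
    by (intro measure_mono_fmeasurable) (auto simp: sets_nu fmeasurable_def em_atMost_nu)
qed

lemma Hn_seq: "(\<lambda>n. Hn (s + 1 / real (Suc n))) \<longlonglongrightarrow> Hn s"
proof -
  define A where "A n = {..s + 1 / real (Suc n)}" for n
  have dec: "decseq A" unfolding A_def
  proof (intro decseq_SucI subsetI)
    fix n v assume "v \<in> {..s + 1 / real (Suc (Suc n))}"
    moreover have "1 / real (Suc (Suc n)) \<le> 1 / real (Suc n)" by (simp add: frac_le)
    ultimately show "v \<in> {..s + 1 / real (Suc n)}" by simp
  qed
  have inter: "(\<Inter>n. A n) = {..s}"
  proof (intro equalityI subsetI)
    fix v assume v: "v \<in> (\<Inter>n. A n)"
    show "v \<in> {..s}"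
    proof (rule ccontr)
      assume "v \<notin> {..s}"
      then have "v - s > 0" by simp
      then obtain n where "1 / real (Suc n) < v - s" by (rule nat_approx_posE)
      moreover have "v \<le> s + 1 / real (Suc n)" using v by (auto simp: A_def)
      ultimately show False by simp
    qed
  next
    fix v assume "v \<in> {..s}"
    then show "v \<in> (\<Inter>n. A n)" by (auto simp: A_def intro: order_trans[of v s])
  qed
  have "(\<lambda>n. emeasure \<nu> (A n)) \<longlonglongrightarrow> emeasure \<nu> (\<Inter>n. A n)"
    by (rule Lim_emeasure_decseq[OF _ dec]) (use em_atMost_nu in \<open>auto simp: A_def sets_nu less_top\<close>)
  then have "(\<lambda>n. ennreal (Hn (s + 1 / real (Suc n)))) \<longlonglongrightarrow> ennreal (Hn s)"
    unfolding inter by (simp add: A_def em_atMost_eq)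
  then show ?thesis by (rule tendsto_ennrealD) (auto simp: Hn_def)
qed

lemma Hn_rc: "continuous (at_right s) Hn"
proof -
  have "(Hn \<longlongrightarrow> Hn s) (at_right s)"
  proof (rule tendstoI)
    fix e :: real assume e: "e > 0"
    have "\<forall>\<^sub>F n in sequentially. Hn (s + 1 / real (Suc n)) < Hn s + e"
      using order_tendstoD(2)[OF Hn_seq] e by simp
    then obtain N where N: "Hn (s + 1 / real (Suc N)) < Hn s + e"
      by (auto simp: eventually_sequentially)
    show "\<forall>\<^sub>F v in at_right s. dist (Hn v) (Hn s) < e"
      unfolding eventually_at_right_field
    proof (intro exI[of _ "s + 1 / real (Suc N)"] conjI allI impI)
      show "s < s + 1 / real (Suc N)" by simp
      fix v assume v1: "s < v" and v2: "v < s + 1 / real (Suc N)"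
      have "Hn s \<le> Hn v" "Hn v \<le> Hn (s + 1 / real (Suc N))"
        using v1 v2 by (auto intro: monoD[OF Hn_mono])
      then show "dist (Hn v) (Hn s) < e" using N by (simp add: dist_real_def)
    qed
  qed
  then show ?thesis by (simp add: continuous_within)
qed

lemma integral_ind_atMost: "integral\<^sup>L \<nu> (indicator {..s}) = Hn s"
  by (simp add: Hn_def space_nu)

lemma integrable_ind_atMost: "integrable \<nu> (indicator {..s} :: real \<Rightarrow> real)"
  by (intro integrable_real_indicator) (auto simp: sets_nu em_atMost_nu)

end

lemma partition_T0:
  assumes P: "partition_seq t k"
  shows "i < k n \<Longrightarrow> t n i \<ge> 0"
proof (induction i)
  case 0 then show ?case using P by (simp add: partition_seq_def)
next
  case (Suc i)
  then have "t n i \<ge> 0" "t n i < t n (Suc i)" using P by (auto simp: partition_seq_def)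
  then show ?case by simp
qed

lemma jump_sq_nonneg: "(jump x u)\<^sup>2 \<ge> 0" by simp
lemma jump_sq_neg: "u \<le> 0 \<Longrightarrow> (jump x u)\<^sup>2 = 0" by (simp add: jump_def)

lemma Eset_sub:
  assumes P: "partition_seq t k" and xE: "x \<in> Eset t k"
  shows "x \<in> Q0 t k"
proof -
  have xc: "x \<in> cadlag" and cv: "Conv t k x" and jc: "JCp (Ht t k x) x" using xE by (auto simp: Eset_def)
  interpret convx t k x using partition_T0[OF P] cv by unfold_locales auto
  have Djump: "\<forall>u>0. HH u - lft HH u = (jump x u)\<^sup>2" using JCp_iff[OF xc HH_mono HH_rc] jc by simp
  have JC: "(\<forall>s\<ge>0. (\<lambda>u. (jump x u)\<^sup>2) summable_on {0..s}) \<and>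
      continuous_on {0..} (\<lambda>s. HH s - (\<Sum>\<^sub>\<infinity>u\<in>{0..s}. (jump x u)\<^sup>2)) \<and>
      mono_on {0..} (\<lambda>s. HH s - (\<Sum>\<^sub>\<infinity>u\<in>{0..s}. (jump x u)\<^sup>2))"
    using jumpcond_iff[OF HH_mono HH_rc, of "\<lambda>u. (jump x u)\<^sup>2"] Djump jump_sq_neg by simp
  have a0: "\<And>n i. (x (t n (Suc i)) - x (t n i))\<^sup>2 \<ge> 0" by simp
  have gconv: "(\<lambda>n. \<Sum>i<k n. (x (t n (Suc i)) - x (t n i))\<^sup>2 * (if t n i \<le> s then 1 else 0)) \<longlonglongrightarrow> HH s"
    if "s > 0" "isCont HH s" for s
    using GG_conv[OF that] by (simp add: GG_def)
  have conv: "(\<lambda>n. \<Sum>i<k n. (x (t n (Suc i)) - x (t n i))\<^sup>2 * f (t n i)) \<longlonglongrightarrow>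
      integral\<^sup>L (interval_measure HH) (\<lambda>s. f (max 0 s))"
    if f: "continuous_on {0..} f" and fT: "\<exists>T. \<forall>s\<ge>T. f s = 0" for f
  proof -
    obtain Tf where Tf: "\<And>s. s \<ge> Tf \<Longrightarrow> f s = 0" using fT by blast
    show ?thesis by (rule RS[OF a0 partition_T0[OF P] gconv f Tf])
  qed
  have cont': "continuous_on {0..} (\<lambda>s. measure (interval_measure HH) {0..s} - (\<Sum>\<^sub>\<infinity>u\<in>{0..s}. (jump x u)\<^sup>2))"
  proof -
    have "continuous_on {0..} (\<lambda>s. HH s - (\<Sum>\<^sub>\<infinity>u\<in>{0..s}. (jump x u)\<^sup>2))" using JC by blast
    moreover have "continuous_on {0..} (\<lambda>s. HH s - (\<Sum>\<^sub>\<infinity>u\<in>{0..s}. (jump x u)\<^sup>2)) =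
        continuous_on {0..} (\<lambda>s. measure (interval_measure HH) {0..s} - (\<Sum>\<^sub>\<infinity>u\<in>{0..s}. (jump x u)\<^sup>2))"
      by (rule continuous_on_cong) (auto simp: me_Icc0)
    ultimately show ?thesis by simp
  qed
  have mono': "mono_on {0..} (\<lambda>s. measure (interval_measure HH) {0..s} - (\<Sum>\<^sub>\<infinity>u\<in>{0..s}. (jump x u)\<^sup>2))"
  proof -
    have m: "mono_on {0..} (\<lambda>s. HH s - (\<Sum>\<^sub>\<infinity>u\<in>{0..s}. (jump x u)\<^sup>2))" using JC by blast
    show ?thesis
    proof (rule mono_onI)
      fix r s :: real assume rs: "r \<in> {0..}" "s \<in> {0..}" "r \<le> s"
      then show "measure (interval_measure HH) {0..r} - (\<Sum>\<^sub>\<infinity>u\<in>{0..r}. (jump x u)\<^sup>2)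
          \<le> measure (interval_measure HH) {0..s} - (\<Sum>\<^sub>\<infinity>u\<in>{0..s}. (jump x u)\<^sup>2)"
        using mono_onD[OF m rs] by (simp add: me_Icc0)
    qed
  qed
  show ?thesis
    unfolding Q0_def
  proof (intro CollectI conjI exI[of _ "interval_measure HH"] xc allI impI)
    show "sets (interval_measure HH) = sets borel" by simp
    show "emeasure (interval_measure HH) {..<0} = 0" by (rule em_lessThan0)
    show "emeasure (interval_measure HH) {0..T} < \<infinity>" for T using em_Icc0_fin by simp
    show "(\<lambda>n. \<Sum>i<k n. (x (t n (Suc i)) - x (t n i))\<^sup>2 * f (t n i)) \<longlonglongrightarrow>
      integral\<^sup>L (interval_measure HH) (\<lambda>s. f (max 0 s))"
      if "continuous_on {0..} f \<and> (\<exists>T. \<forall>s\<ge>T. f s = 0)" for f using conv that by blast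
    show "(\<lambda>u. (jump x u)\<^sup>2) summable_on {0..s}" if "s \<ge> 0" for s using JC that by blast
  qed (rule cont', rule mono')
qed

lemma Q0_sub:
  assumes P: "partition_seq t k" and xQ: "x \<in> Q0 t k"
  shows "x \<in> Eset t k"
proof -
  obtain \<nu> where xc: "x \<in> cadlag" and s: "sets \<nu> = sets borel" and n: "emeasure \<nu> {..<0} = 0"
    and fin: "\<forall>T. emeasure \<nu> {0..T} < \<infinity>"
    and cvf: "\<forall>f :: real \<Rightarrow> real. continuous_on {0..} f \<and> (\<exists>T. \<forall>s\<ge>T. f s = 0) \<longrightarrow>
         (\<lambda>n. \<Sum>i<k n. (x (t n (Suc i)) - x (t n i))\<^sup>2 * f (t n i))
           \<longlonglongrightarrow> integral\<^sup>L \<nu> (\<lambda>s. f (max 0 s))"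
    and J1: "\<forall>s\<ge>0. (\<lambda>u. (jump x u)\<^sup>2) summable_on {0..s}"
    and J2: "continuous_on {0..} (\<lambda>s. measure \<nu> {0..s} - (\<Sum>\<^sub>\<infinity>u\<in>{0..s}. (jump x u)\<^sup>2))"
    and J3: "mono_on {0..} (\<lambda>s. measure \<nu> {0..s} - (\<Sum>\<^sub>\<infinity>u\<in>{0..s}. (jump x u)\<^sup>2))"
    using xQ unfolding Q0_def by blast
  interpret lfm \<nu> using s n fin by unfold_locales auto
  have T0: "\<And>n i. i < k n \<Longrightarrow> t n i \<ge> 0" by (rule partition_T0[OF P])
  have gmc: "continuous_on UNIV (\<lambda>s. gq q m (max 0 s))" for q m
    unfolding gq_def by (intro continuous_intros)
  have glim: "(\<lambda>n. Sn t k (gq q m) x n) \<longlonglongrightarrow> integral\<^sup>L \<nu> (\<lambda>s. gq q m (max 0 s))" for q m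
  proof -
    have "\<forall>s\<ge>q + 1. gq q m s = 0"
    proof (intro allI impI)
      fix s assume "s \<ge> q + 1"
      moreover have "1 / real (Suc m) \<le> 1" by simp
      ultimately show "gq q m s = 0" by (intro gq_zero) linarith
    qed
    then have "continuous_on {0..} (gq q m) \<and> (\<exists>T. \<forall>s\<ge>T. gq q m s = 0)" using gq_cont by blast
    then show ?thesis using cvf unfolding Sn_def by blast
  qed
  have cv: "Conv t k x" unfolding Conv_def using glim by (auto simp: convergent_def)
  have Lq_eq: "Lq t k q m x = integral\<^sup>L \<nu> (\<lambda>s. gq q m (max 0 s))" for q m
    unfolding Lq_def by (rule limI[OF glim])
  have int_g: "integrable \<nu> (\<lambda>s. gq q m (max 0 s))" if q: "q \<ge> 0" for q m
  proof -
    have meas: "(\<lambda>s. gq q m (max 0 s)) \<in> borel_measurable \<nu>"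
      by (subst measurable_cong_sets[OF s refl]) (rule borel_measurable_continuous_onI[OF gmc])
    have ae: "AE s in \<nu>. norm (gq q m (max 0 s)) \<le> norm (indicator {..q+1} s :: real)"
    proof (rule AE_I2)
      fix s :: real
      show "norm (gq q m (max 0 s)) \<le> norm (indicator {..q+1} s :: real)"
      proof (cases "s \<le> q + 1")
        case True then show ?thesis using gq_bounds[of q m "max 0 s"] by simp
      next
        case False
        then have "max 0 s \<ge> q + 1 / real (Suc m)" using q by (simp add: max_def frac_le) (smt (verit) divide_le_eq_1 of_nat_0_le_iff of_nat_Suc)
        then show ?thesis using gq_zero[of q m "max 0 s"] False by simp
      qed
    qed
    show ?thesis by (rule Bochner_Integration.integrable_bound[OF integrable_ind_atMost meas ae])
  qed
  have Lq_lo: "Hn q \<le> Lq t k q m x" if q: "q \<ge> 0" for q m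
  proof -
    have "Hn q = integral\<^sup>L \<nu> (indicator {..q})" by (rule integral_ind_atMost[symmetric])
    also have "\<dots> \<le> integral\<^sup>L \<nu> (\<lambda>s. gq q m (max 0 s))"
    proof (rule integral_mono[OF integrable_ind_atMost int_g[OF q]])
      fix s :: real
      show "indicator {..q} s \<le> gq q m (max 0 s)"
      proof (cases "s \<le> q")
        case True then show ?thesis using q gq_one[of "max 0 s" q m] by simp
      next
        case False then show ?thesis using gq_bounds[of q m "max 0 s"] by simp
      qed
    qed
    finally show ?thesis unfolding Lq_eq .
  qed
  have Lq_up: "Lq t k q m x \<le> Hn (q + 1 / real (Suc m))" if q: "q \<ge> 0" for q m
  proof -
    have "integral\<^sup>L \<nu> (\<lambda>s. gq q m (max 0 s)) \<le> integral\<^sup>L \<nu> (indicator {..q + 1 / real (Suc m)})"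
    proof (rule integral_mono[OF int_g[OF q] integrable_ind_atMost])
      fix s :: real
      show "gq q m (max 0 s) \<le> indicator {..q + 1 / real (Suc m)} s"
      proof (cases "s \<le> q + 1 / real (Suc m)")
        case True then show ?thesis using gq_bounds[of q m "max 0 s"] by simp
      next
        case False
        then have "max 0 s \<ge> q + 1 / real (Suc m)" by simp
        then show ?thesis using gq_zero[of q m "max 0 s"] by simp
      qed
    qed
    then show ?thesis unfolding Lq_eq integral_ind_atMost .
  qed
  interpret convx t k x using T0 cv by unfold_locales auto
  have Fq_eq: "Fq t k q x = Hn q" if q: "q \<ge> 0" for q
  proof (rule antisym)
    show "Hn q \<le> Fq t k q x" unfolding Fq_def by (rule cINF_greatest) (use Lq_lo q in auto)
    show "Fq t k q x \<le> Hn q"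
    proof (rule field_le_epsilon)
      fix e :: real assume e: "e > 0"
      have "\<forall>\<^sub>F N in sequentially. Hn (q + 1 / real (Suc N)) < Hn q + e"
        using order_tendstoD(2)[OF Hn_seq] e by simp
      then obtain N where N: "Hn (q + 1 / real (Suc N)) < Hn q + e"
        by (auto simp: eventually_sequentially)
      have bdd: "bdd_below (range (\<lambda>m. Lq t k q m x))"
        by (rule bdd_belowI2[of _ "Hn q"]) (use Lq_lo q in auto)
      have "Fq t k q x \<le> Lq t k q N x" unfolding Fq_def by (rule cINF_lower[OF bdd]) simp
      also have "\<dots> \<le> Hn (q + 1 / real (Suc N))" by (rule Lq_up[OF q])
      finally show "Fq t k q x \<le> Hn q + e" using N by simp
    qed
  qed
  have Ht_eq: "Ht t k x = Hn"
  proof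
    fix s :: real
    show "Ht t k x s = Hn s"
    proof (cases "s < 0")
      case True then show ?thesis by (simp add: Ht_def Hn_neg)
    next
      case False
      then have s0: "s \<ge> 0" by simp
      show ?thesis
      proof (rule antisym)
        show "Hn s \<le> HH s" unfolding HH_pos[OF s0]
        proof (rule cINF_greatest[OF Qset_ne])
          fix q assume "q \<in> {q \<in> \<rat>. s < q}"
          then show "Hn s \<le> Fq t k q x" using Fq_eq[of q] s0 monoD[OF Hn_mono, of s q] by auto
        qed
        show "HH s \<le> Hn s"
        proof (rule field_le_epsilon)
          fix e :: real assume e: "e > 0"
          have "(Hn \<longlongrightarrow> Hn s) (at_right s)" using Hn_rc[of s] by (simp add: continuous_within)
          then have "\<forall>\<^sub>F v in at_right s. dist (Hn v) (Hn s) < e" using e by (rule tendstoD)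
          then obtain b where b: "s < b" "\<And>v. s < v \<Longrightarrow> v < b \<Longrightarrow> dist (Hn v) (Hn s) < e"
            unfolding eventually_at_right_field by blast
          obtain q where q: "q \<in> \<rat>" "s < q" "q < b" using Rats_dense_in_real[OF b(1)] by blast
          have "HH s \<le> Fq t k q x" using q s0 by (intro HH_le_Fq) auto
          also have "\<dots> = Hn q" using Fq_eq[of q] q s0 by simp
          also have "\<dots> < Hn s + e" using b(2)[OF q(2) q(3)] by (simp add: dist_real_def)
          finally show "HH s \<le> Hn s + e" by simp
        qed
      qed
    qed
  qed
  have J2': "continuous_on {0..} (\<lambda>s. Hn s - (\<Sum>\<^sub>\<infinity>u\<in>{0..s}. (jump x u)\<^sup>2))"
  proof -
    have "continuous_on {0..} (\<lambda>s. measure \<nu> {0..s} - (\<Sum>\<^sub>\<infinity>u\<in>{0..s}. (jump x u)\<^sup>2)) =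
        continuous_on {0..} (\<lambda>s. Hn s - (\<Sum>\<^sub>\<infinity>u\<in>{0..s}. (jump x u)\<^sup>2))"
      by (rule continuous_on_cong) (auto simp: Hn_Icc0)
    then show ?thesis using J2 by simp
  qed
  have J3': "mono_on {0..} (\<lambda>s. Hn s - (\<Sum>\<^sub>\<infinity>u\<in>{0..s}. (jump x u)\<^sup>2))"
  proof (rule mono_onI)
    fix r s :: real assume rs: "r \<in> {0..}" "s \<in> {0..}" "r \<le> s"
    then show "Hn r - (\<Sum>\<^sub>\<infinity>u\<in>{0..r}. (jump x u)\<^sup>2) \<le> Hn s - (\<Sum>\<^sub>\<infinity>u\<in>{0..s}. (jump x u)\<^sup>2)"
      using mono_onD[OF J3 rs] by (simp add: Hn_Icc0)
  qed
  have Dj: "\<forall>u>0. Hn u - lft Hn u = (jump x u)\<^sup>2"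
    using jumpcond_iff[OF Hn_mono Hn_rc, of "\<lambda>u. (jump x u)\<^sup>2"] jump_sq_neg J1 J2' J3' by simp
  have "JCp Hn x" using JCp_iff[OF xc Hn_mono Hn_rc] Dj by simp
  then show ?thesis using xc cv Ht_eq by (simp add: Eset_def)
qed

theorem mainTheorem15:
  fixes t :: "nat \<Rightarrow> nat \<Rightarrow> real" and k :: "nat \<Rightarrow> nat"
  assumes "partition_seq t k"
  shows "Q0 t k \<in> skorokhod_borel"
proof -
  have "Q0 t k = Eset t k" using Eset_sub[OF assms] Q0_sub[OF assms] by blast
  then show ?thesis using Eset_sets sets_Msk by simp
qed

end
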